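(* For every real number $\varepsilon>0$ there exists a set $S\subseteq\mathbb{Z}^{2}$ of lattice points in general position (no three points of $S$ lie on a common line) such that $$\left|S\cap[1,n]^{2}\right|=\Theta\!\left(\frac{n}{\log^{1+\varepsilon}n}\right).$$ In particular, $$\liminf_{n\to\infty}\frac{\left|S\cap[1,n]^{2}\right|}{n/\log^{1+\varepsilon}n}>0.$$
   Context: $[1,n]^2$ denotes the set of lattice points $(x,y)\in\mathbb{Z}^2$ with $1\le x,y\le n$. *)

theory Defs
  imports "HOL-Analysis.Analysis" "HOL-Library.Landau_Symbols"
begin

definition lat_pt :: "int \<times> int \<Rightarrow> real \<times> real" where
  "lat_pt p = (real_of_int (fst p), real_of_int (snd p))"

definition general_position :: "(int \<times> int) set \<Rightarrow> bool" where
  "general_position S \<longleftrightarrow>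
     (\<forall>p\<in>S. \<forall>q\<in>S. \<forall>r\<in>S. p \<noteq> q \<and> p \<noteq> r \<and> q \<noteq> r \<longrightarrow>
        \<not> collinear {lat_pt p, lat_pt q, lat_pt r})"

definition grid :: "nat \<Rightarrow> (int \<times> int) set" where
  "grid n = {1..int n} \<times> {1..int n}"

end

theory Submission
  imports Defs "HOL-Real_Asymp.Real_Asymp"
begin


definition coll :: "int \<times> int \<Rightarrow> int \<times> int \<Rightarrow> int \<times> int \<Rightarrow> bool" where
  "coll a b c \<longleftrightarrow> (fst b - fst a) * (snd c - snd a) = (snd b - snd a) * (fst c - fst a)"

definition w :: "int \<times> int \<Rightarrow> int \<times> int \<Rightarrow> real" where
  "w a b = real_of_int (gcd (fst b - fst a) (snd b - snd a)) /
           real_of_int (max \<bar>fst b - fst a\<bar> \<bar>snd b - snd a\<bar>)"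

lemma count_dvd_interval:
  fixes X :: "int set" and u lo hi :: int
  assumes "u > 0" "lo \<le> hi" "X \<subseteq> {lo..hi}" "\<And>x y. x \<in> X \<Longrightarrow> y \<in> X \<Longrightarrow> u dvd (x - y)"
  shows "int (card X) \<le> (hi - lo) div u + 1"
proof (cases "X = {}")
  case True
  then show ?thesis
    using assms(1,2) by (simp add: pos_imp_zdiv_nonneg_iff)
next
  case False
  have fin: "finite X" using assms(3) by (rule finite_subset) simp
  define m where "m = Min X"
  have mX: "m \<in> X" using fin False by (simp add: m_def)
  have mle: "\<And>x. x \<in> X \<Longrightarrow> m \<le> x" using fin by (simp add: m_def)
  define f where "f x = (x - m) div u" for x
  have inj: "inj_on f X"
  proof (rule inj_onI)
    fix x y assume xy: "x \<in> X" "y \<in> X" "f x = f y"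
    have "u dvd (x - m)" "u dvd (y - m)" using assms(4) xy mX by auto
    then have "x - m = u * ((x - m) div u)" "y - m = u * ((y - m) div u)" by simp_all
    then have "x - m = y - m" using xy(3) unfolding f_def by metis
    then show "x = y" by simp
  qed
  have img: "f ` X \<subseteq> {0..(hi - lo) div u}"
  proof
    fix z assume "z \<in> f ` X"
    then obtain x where x: "x \<in> X" "z = f x" by auto
    have "x \<le> hi" "lo \<le> m" using x(1) mX assms(3) by auto
    moreover have "m \<le> x" using mle x(1) by simp
    ultimately have "0 \<le> x - m" "x - m \<le> hi - lo" by linarith+
    then show "z \<in> {0..(hi - lo) div u}" using assms(1) x(2) unfolding f_def
      by (auto intro: zdiv_mono1 pos_imp_zdiv_nonneg_iff[THEN iffD2])
  qed
  have "card X = card (f ` X)" using inj by (simp add: card_image)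
  also have "\<dots> \<le> card {0..(hi - lo) div u}" using img by (intro card_mono) auto
  finally have c: "card X \<le> card {0..(hi - lo) div u}" .
  have q: "0 \<le> (hi - lo) div u" using assms(1,2) by (simp add: pos_imp_zdiv_nonneg_iff)
  have "card {0..(hi - lo) div u} = nat ((hi - lo) div u + 1)" by simp
  with c q show ?thesis by linarith
qed

lemma line_count_x:
  fixes a b :: "int \<times> int" and x0 y0 :: int and N :: nat
  assumes ab: "a \<noteq> b" and le: "\<bar>snd b - snd a\<bar> \<le> \<bar>fst b - fst a\<bar>"
  shows "real (card {c \<in> {x0+1..x0+int N} \<times> {y0+1..y0+int N}. coll a b c}) \<le> real N * w a b + 1"
proof -
  define dx where "dx = fst b - fst a"
  define dy where "dy = snd b - snd a"
  have dx0: "dx \<noteq> 0" using ab le unfolding dx_def dy_def by (auto simp: prod_eq_iff)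
  define g where "g = gcd dx dy"
  have g0: "g > 0" using dx0 unfolding g_def by simp
  define u where "u = dx div g"
  define v where "v = dy div g"
  have dxu: "dx = g * u" unfolding u_def g_def by simp
  have dyv: "dy = g * v" unfolding v_def g_def by simp
  have cop: "coprime u v" unfolding u_def v_def g_def using dx0 by (intro div_gcd_coprime) auto
  have u0: "u \<noteq> 0" using dx0 dxu by auto
  have wab: "w a b = g / \<bar>dx\<bar>"
    using le unfolding w_def dx_def dy_def g_def by (simp add: max_def)
  let ?X = "{c \<in> {x0+1..x0+int N} \<times> {y0+1..y0+int N}. coll a b c}"
  have key: "u dvd (fst c - fst a)" if "c \<in> ?X" for c
  proof -
    have "dx * (snd c - snd a) = dy * (fst c - fst a)" using that unfolding coll_def dx_def dy_def by simp
    hence "g * (u * (snd c - snd a)) = g * (v * (fst c - fst a))" by (simp add: dxu dyv ac_simps)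
    hence "u * (snd c - snd a) = v * (fst c - fst a)" using g0 by simp
    hence "u dvd v * (fst c - fst a)" by (metis dvd_triv_left)
    thus ?thesis using cop by (simp add: coprime_dvd_mult_right_iff)
  qed
  have injf: "inj_on fst ?X"
  proof (rule inj_onI)
    fix c d assume cd: "c \<in> ?X" "d \<in> ?X" "fst c = fst d"
    have "dx * (snd c - snd a) = dy * (fst c - fst a)" "dx * (snd d - snd a) = dy * (fst d - fst a)"
      using cd unfolding coll_def dx_def dy_def by auto
    hence "dx * (snd c - snd a) = dx * (snd d - snd a)" using cd(3) by simp
    hence "snd c = snd d" using dx0 by simp
    thus "c = d" using cd(3) by (simp add: prod_eq_iff)
  qed
  show ?thesis
  proof (cases "N = 0")
    case True then show ?thesis by simp
  next
    case False
    have "int (card (fst ` ?X)) \<le> ((x0 + int N) - (x0 + 1)) div \<bar>u\<bar> + 1"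
    proof (rule count_dvd_interval)
      show "0 < \<bar>u\<bar>" using u0 by simp
      show "x0 + 1 \<le> x0 + int N" using False by simp
      show "fst ` ?X \<subseteq> {x0 + 1..x0 + int N}" by auto
      fix x y assume "x \<in> fst ` ?X" "y \<in> fst ` ?X"
      then obtain c d where "c \<in> ?X" "d \<in> ?X" "x = fst c" "y = fst d" by auto
      then have "u dvd (fst c - fst a)" "u dvd (fst d - fst a)" using key by auto
      then have "u dvd ((fst c - fst a) - (fst d - fst a))" by (rule dvd_diff)
      then have "u dvd (x - y)" using \<open>x = fst c\<close> \<open>y = fst d\<close> by simp
      then show "\<bar>u\<bar> dvd x - y" by simp
    qed
    hence c1: "int (card ?X) \<le> (int N - 1) div \<bar>u\<bar> + 1" using injf by (simp add: card_image)
    have "real_of_int ((int N - 1) div \<bar>u\<bar>) \<le> real_of_int (int N - 1) / real_of_int \<bar>u\<bar>"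
      by (rule real_of_int_div4)
    also have "\<dots> \<le> real N / \<bar>u\<bar>" using u0 by (simp add: divide_right_mono)
    also have "\<dots> = real N * w a b"
    proof -
      have "\<bar>dx\<bar> = g * \<bar>u\<bar>" using dxu g0 by (simp add: abs_mult)
      then show ?thesis using wab g0 u0 by (simp add: field_simps)
    qed
    finally have "real_of_int ((int N - 1) div \<bar>u\<bar>) \<le> real N * w a b" .
    moreover have "real (card ?X) \<le> real_of_int ((int N - 1) div \<bar>u\<bar>) + 1"
    proof -
      have "real_of_int (int (card ?X)) \<le> real_of_int ((int N - 1) div \<bar>u\<bar> + 1)"
        using c1 by (simp only: of_int_le_iff)
      then show ?thesis by simp
    qed
    ultimately show ?thesis by linarith
  qed
qed


definition swp :: "int \<times> int \<Rightarrow> int \<times> int" where "swp p = (snd p, fst p)"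

lemma coll_swp: "coll (swp a) (swp b) (swp c) \<longleftrightarrow> coll a b c"
  unfolding coll_def swp_def by (auto simp: algebra_simps)

lemma w_swp: "w (swp a) (swp b) = w a b"
  unfolding w_def swp_def by (simp add: gcd.commute max.commute)

lemma line_count:
  fixes a b :: "int \<times> int" and x0 y0 :: int and N :: nat
  assumes ab: "a \<noteq> b"
  shows "real (card {c \<in> {x0+1..x0+int N} \<times> {y0+1..y0+int N}. coll a b c}) \<le> real N * w a b + 1"
proof (cases "\<bar>snd b - snd a\<bar> \<le> \<bar>fst b - fst a\<bar>")
  case True
  then show ?thesis using line_count_x[OF ab] by blast
next
  case False
  have ab': "swp a \<noteq> swp b" using ab by (auto simp: swp_def prod_eq_iff)
  have le': "\<bar>snd (swp b) - snd (swp a)\<bar> \<le> \<bar>fst (swp b) - fst (swp a)\<bar>"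
    using False by (simp add: swp_def)
  have bij: "bij_betw swp {c \<in> {x0+1..x0+int N} \<times> {y0+1..y0+int N}. coll a b c}
                        {c \<in> {y0+1..y0+int N} \<times> {x0+1..x0+int N}. coll (swp a) (swp b) c}"
  proof (rule bij_betw_byWitness[where f' = swp])
    show "\<forall>x\<in>{c \<in> {x0 + 1..x0 + int N} \<times> {y0 + 1..y0 + int N}. coll a b c}. swp (swp x) = x"
      by (simp add: swp_def)
    show "\<forall>y\<in>{c \<in> {y0 + 1..y0 + int N} \<times> {x0 + 1..x0 + int N}. coll (swp a) (swp b) c}. swp (swp y) = y"
      by (simp add: swp_def)
    show "swp ` {c \<in> {x0 + 1..x0 + int N} \<times> {y0 + 1..y0 + int N}. coll a b c}
      \<subseteq> {c \<in> {y0 + 1..y0 + int N} \<times> {x0 + 1..x0 + int N}. coll (swp a) (swp b) c}"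
      using coll_swp by (auto simp: swp_def)
    show "swp ` {c \<in> {y0 + 1..y0 + int N} \<times> {x0 + 1..x0 + int N}. coll (swp a) (swp b) c}
      \<subseteq> {c \<in> {x0 + 1..x0 + int N} \<times> {y0 + 1..y0 + int N}. coll a b c}"
    proof
      fix z assume "z \<in> swp ` {c \<in> {y0 + 1..y0 + int N} \<times> {x0 + 1..x0 + int N}. coll (swp a) (swp b) c}"
      then obtain c where c: "c \<in> {y0 + 1..y0 + int N} \<times> {x0 + 1..x0 + int N}" "coll (swp a) (swp b) c" "z = swp c" by auto
      have "coll (swp a) (swp b) (swp (swp c))" using c(2) by (simp add: swp_def)
      hence "coll a b (swp c)" using coll_swp by blast
      then show "z \<in> {c \<in> {x0 + 1..x0 + int N} \<times> {y0 + 1..y0 + int N}. coll a b c}"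
        using c(1,3) by (auto simp: swp_def)
    qed
  qed
  have "real (card {c \<in> {y0+1..y0+int N} \<times> {x0+1..x0+int N}. coll (swp a) (swp b) c}) \<le> real N * w (swp a) (swp b) + 1"
    using line_count_x[OF ab' le'] by blast
  then show ?thesis using bij_betw_same_card[OF bij] w_swp by simp
qed

definition nrm :: "int \<times> int \<Rightarrow> int" where "nrm d = max \<bar>fst d\<bar> \<bar>snd d\<bar>"

definition ibox :: "int \<Rightarrow> (int \<times> int) set" where "ibox M = {-M..M} \<times> {-M..M}"

lemma finite_ibox[simp]: "finite (ibox M)" by (simp add: ibox_def)

lemma card_ibox: "M \<ge> 0 \<Longrightarrow> card (ibox M) = nat (2*M+1)^2"
  by (simp add: ibox_def card_cartesian_product power2_eq_square nat_mult_distrib)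

lemma shell_sum: "(\<Sum>u\<in>ibox (int M) - {(0,0)}. 1 / real_of_int (nrm u)) \<le> 8 * real M"
proof (induction M)
  case 0
  have "ibox 0 = {(0,0)}" by (auto simp: ibox_def)
  then show ?case by simp
next
  case (Suc M)
  have sub: "ibox (int M) \<subseteq> ibox (int (Suc M))" by (auto simp: ibox_def)
  have eq: "ibox (int (Suc M)) - {(0,0)} = (ibox (int M) - {(0,0)}) \<union> (ibox (int (Suc M)) - ibox (int M))"
    using sub by (auto simp: ibox_def)
  have disj: "(ibox (int M) - {(0,0)}) \<inter> (ibox (int (Suc M)) - ibox (int M)) = {}" by auto
  have nrm_sh: "nrm u = int M + 1" if "u \<in> ibox (int (Suc M)) - ibox (int M)" for u
    using that unfolding ibox_def nrm_def by auto
  have card_sh: "card (ibox (int (Suc M)) - ibox (int M)) = 8 * M + 8"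
  proof -
    have "card (ibox (int (Suc M)) - ibox (int M)) = card (ibox (int (Suc M))) - card (ibox (int M))"
      using sub by (simp add: card_Diff_subset)
    also have "\<dots> = (2*M+3)^2 - (2*M+1)^2"
      by (simp add: card_ibox nat_add_distrib nat_mult_distrib add.commute)
    also have "\<dots> = 8 * M + 8" by (simp add: power2_eq_square algebra_simps)
    finally show ?thesis .
  qed
  have "(\<Sum>u\<in>ibox (int (Suc M)) - ibox (int M). 1 / real_of_int (nrm u)) = (8 * M + 8) * (1 / (real M + 1))"
    using nrm_sh card_sh by (simp add: sum.cong[where B = "ibox (int (Suc M)) - ibox (int M)" and h = "\<lambda>_. 1 / (real M + 1)"])
  also have "\<dots> = 8" by (simp add: field_simps)
  finally have sh: "(\<Sum>u\<in>ibox (int (Suc M)) - ibox (int M). 1 / real_of_int (nrm u)) = 8" .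
  have "(\<Sum>u\<in>ibox (int (Suc M)) - {(0,0)}. 1 / real_of_int (nrm u))
      = (\<Sum>u\<in>ibox (int M) - {(0,0)}. 1 / real_of_int (nrm u)) + (\<Sum>u\<in>ibox (int (Suc M)) - ibox (int M). 1 / real_of_int (nrm u))"
    unfolding eq by (rule sum.union_disjoint) (auto simp: disj)
  then show ?case using Suc.IH sh by simp
qed

lemma harm_dyadic: "(\<Sum>t\<in>{1..(2::nat)^K}. 1 / real t) \<le> real K + 1"
proof (induction K)
  case 0 then show ?case by simp
next
  case (Suc K)
  have eq: "{1..(2::nat)^Suc K} = {1..2^K} \<union> {2^K<..2^Suc K}" by auto
  have "(\<Sum>t\<in>{2^K<..(2::nat)^Suc K}. 1 / real t) \<le> (\<Sum>t\<in>{2^K<..(2::nat)^Suc K}. 1 / 2^K)"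
  proof (rule sum_mono)
    fix t assume "t \<in> {2^K<..(2::nat)^Suc K}"
    hence "real (2^K) \<le> real t" by simp
    moreover have "(0::real) < 2^K" by simp
    ultimately show "1 / real t \<le> 1 / 2^K" by (simp add: frac_le)
  qed
  also have "\<dots> = 1" by simp
  finally have h: "(\<Sum>t\<in>{2^K<..(2::nat)^Suc K}. 1 / real t) \<le> 1" .
  have "(\<Sum>t\<in>{1..(2::nat)^Suc K}. 1 / real t) = (\<Sum>t\<in>{1..2^K}. 1 / real t) + (\<Sum>t\<in>{2^K<..(2::nat)^Suc K}. 1 / real t)"
    unfolding eq by (rule sum.union_disjoint) auto
  then show ?case using Suc.IH h by simp
qed


definition Gam :: "int \<Rightarrow> real" where
  "Gam D = (\<Sum>d\<in>ibox D - {(0,0)}. w (0,0) d)"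

lemma w_nonneg: "w a b \<ge> 0"
  unfolding w_def by simp

lemma w0: "w (0,0) d = real_of_int (gcd (fst d) (snd d)) / real_of_int (nrm d)"
  unfolding w_def nrm_def by simp

lemma gam_bound: "Gam (2^K) \<le> 8 * 2^K * (real K + 1)"
proof -
  define D :: nat where "D = 2^K"
  define A where "A = ibox (int D) - {(0,0)}"
  define g where "g d = nat (gcd (fst d) (snd d))" for d :: "int \<times> int"
  have finA: "finite A" unfolding A_def by simp
  have gA: "g ` A \<subseteq> {1..D}"
  proof
    fix t assume "t \<in> g ` A"
    then obtain d where d: "d \<in> A" "t = g d" by auto
    have nz: "d \<noteq> (0,0)" using d(1) by (simp add: A_def)
    have gpos: "gcd (fst d) (snd d) > 0" using nz by (cases d) auto
    moreover have "gcd (fst d) (snd d) \<le> int D"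
    proof (cases "fst d = 0")
      case True
      then have "snd d \<noteq> 0" using nz by (cases d) auto
      then have "gcd (fst d) (snd d) \<le> \<bar>snd d\<bar>" by (simp add: True)
      also have "\<dots> \<le> int D" using d(1) by (auto simp: A_def ibox_def)
      finally show ?thesis .
    next
      case False
      then have "gcd (fst d) (snd d) \<le> \<bar>fst d\<bar>"
        by (metis gcd_abs1_int gcd_le1_int zero_less_abs_iff)
      also have "\<dots> \<le> int D" using d(1) by (auto simp: A_def ibox_def)
      finally show ?thesis .
    qed
    ultimately have "0 < gcd (fst d) (snd d) \<and> gcd (fst d) (snd d) \<le> int D" by blast
    moreover have "int t = gcd (fst d) (snd d)" using gpos d(2) unfolding g_def by simp
    ultimately have "1 \<le> int t" "int t \<le> int D" by linarith+
    then show "t \<in> {1..D}" by simp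
  qed
  have "Gam (int D) = (\<Sum>t\<in>{1..D}. \<Sum>d\<in>{x \<in> A. g x = t}. w (0,0) d)"
    unfolding Gam_def A_def[symmetric] by (rule sum.group[symmetric, OF finA _ gA]) simp
  also have "\<dots> \<le> (\<Sum>t\<in>{1..D}. 8 * (real D / real t))"
  proof (rule sum_mono)
    fix t assume t: "t \<in> {1..D}"
    define At where "At = {x \<in> A. g x = t}"
    define h where "h d = (fst d div int t, snd d div int t)" for d :: "int \<times> int"
    have props: "int t dvd fst d \<and> int t dvd snd d \<and> d = (int t * fst (h d), int t * snd (h d)) \<and>
        h d \<in> ibox (int (D div t)) - {(0,0)} \<and> w (0,0) d = 1 / real_of_int (nrm (h d))"
      if dA: "d \<in> At" for d
    proof -
      have dA': "d \<in> A" "g d = t" using dA by (auto simp: At_def)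
      have gt: "gcd (fst d) (snd d) = int t" using dA'(2) unfolding g_def by (simp add: nat_eq_iff)
      have dv: "int t dvd fst d" "int t dvd snd d" using gt by (metis gcd_dvd1 gcd_dvd2)+
      have deq: "d = (int t * fst (h d), int t * snd (h d))" using dv unfolding h_def by (simp add: prod_eq_iff)
      have tpos: "int t > 0" using t by simp
      have bnd: "\<bar>q\<bar> \<le> int (D div t)" if "\<bar>int t * q\<bar> \<le> int D" for q
      proof -
        have "(\<bar>q\<bar> * int t) div int t \<le> int D div int t"
          using that tpos by (intro zdiv_mono1) (auto simp: abs_mult mult.commute)
        then show ?thesis using tpos by (simp add: zdiv_int)
      qed
      have inbox: "\<bar>fst d\<bar> \<le> int D" "\<bar>snd d\<bar> \<le> int D" using dA'(1) by (auto simp: A_def ibox_def)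
      have fe: "fst d = int t * fst (h d)" "snd d = int t * snd (h d)" using deq by (metis fst_conv snd_conv)+
      have "\<bar>fst (h d)\<bar> \<le> int (D div t)" using bnd[of "fst (h d)"] inbox(1) fe(1) by simp
      moreover have "\<bar>snd (h d)\<bar> \<le> int (D div t)" using bnd[of "snd (h d)"] inbox(2) fe(2) by simp
      ultimately have hb: "h d \<in> ibox (int (D div t))" by (cases "h d") (auto simp: ibox_def abs_le_iff)
      have hnz: "h d \<noteq> (0,0)" using fe dA'(1) by (auto simp: A_def prod_eq_iff)
      have "nrm d = int t * nrm (h d)"
        using tpos unfolding nrm_def fe by (simp add: abs_mult max_mult_distrib_left)
      then have "w (0,0) d = 1 / real_of_int (nrm (h d))"
        unfolding w0 gt using tpos by simp
      then show ?thesis using dv deq hb hnz by blast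
    qed
    have inj: "inj_on h At"
    proof (rule inj_onI)
      fix x y assume "x \<in> At" "y \<in> At" "h x = h y"
      then have "x = (int t * fst (h x), int t * snd (h x))" "y = (int t * fst (h y), int t * snd (h y))"
        using props by blast+
      then show "x = y" using \<open>h x = h y\<close> by simp
    qed
    have weq: "w (0,0) d = 1 / real_of_int (nrm (h d))" if "d \<in> At" for d
      using props[OF that] by blast
    have "(\<Sum>d\<in>At. w (0,0) d) = (\<Sum>d\<in>At. 1 / real_of_int (nrm (h d)))"
      using weq by (rule sum.cong[OF refl])
    also have "\<dots> = (\<Sum>u\<in>h ` At. 1 / real_of_int (nrm u))"
      using inj by (simp add: sum.reindex)
    also have "\<dots> \<le> (\<Sum>u\<in>ibox (int (D div t)) - {(0,0)}. 1 / real_of_int (nrm u))"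
    proof (rule sum_mono2)
      show "finite (ibox (int (D div t)) - {(0,0)})" by simp
      show "h ` At \<subseteq> ibox (int (D div t)) - {(0,0)}"
      proof
        fix u assume "u \<in> h ` At"
        then obtain d where "d \<in> At" "u = h d" by blast
        then show "u \<in> ibox (int (D div t)) - {(0,0)}"
          using conjunct1[OF conjunct2[OF conjunct2[OF conjunct2[OF props[of d]]]]] by simp
      qed
      fix u assume "u \<in> ibox (int (D div t)) - {(0,0)} - h ` At"
      then show "0 \<le> 1 / real_of_int (nrm u)" unfolding nrm_def by simp
    qed
    also have "\<dots> \<le> 8 * real (D div t)" by (rule shell_sum)
    also have "\<dots> \<le> 8 * (real D / real t)"
      using of_nat_div_le_of_nat[of D t, where 'a=real] by simp
    finally show "(\<Sum>d\<in>{x \<in> A. g x = t}. w (0,0) d) \<le> 8 * (real D / real t)" unfolding At_def .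
  qed
  also have "\<dots> = 8 * real D * (\<Sum>t\<in>{1..D}. 1 / real t)"
    by (simp add: sum_distrib_left)
  also have "\<dots> \<le> 8 * real D * (real K + 1)"
    unfolding D_def by (intro mult_left_mono harm_dyadic) auto
  finally show ?thesis unfolding D_def by simp
qed

lemma sum_w_le_Gam:
  assumes "finite B" "\<And>c. c \<in> B \<Longrightarrow> nrm (c - a) \<le> D"
  shows "(\<Sum>c\<in>B - {a}. w a c) \<le> Gam D"
proof -
  define h where "h c = c - a" for c :: "int \<times> int"
  have inj: "inj_on h (B - {a})" unfolding h_def by (rule inj_onI) simp
  have wa: "w a c = w (0,0) (h c)" for c unfolding w_def h_def by simp
  have "(\<Sum>c\<in>B - {a}. w a c) = (\<Sum>d\<in>h ` (B - {a}). w (0,0) d)"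
    using inj by (simp add: sum.reindex wa)
  also have "\<dots> \<le> Gam D" unfolding Gam_def
  proof (rule sum_mono2)
    show "finite (ibox D - {(0, 0)})" by simp
    show "h ` (B - {a}) \<subseteq> ibox D - {(0, 0)}"
    proof
      fix d assume "d \<in> h ` (B - {a})"
      then obtain c where c: "c \<in> B" "c \<noteq> a" "d = c - a" unfolding h_def by auto
      have "nrm d \<le> D" using assms(2) c by simp
      then have "d \<in> ibox D" unfolding nrm_def ibox_def by (cases d) auto
      moreover have "d \<noteq> (0,0)" using c by (auto simp: prod_eq_iff)
      ultimately show "d \<in> ibox D - {(0, 0)}" by simp
    qed
    show "\<And>x. x \<in> ibox D - {(0, 0)} - h ` (B - {a}) \<Longrightarrow> 0 \<le> w (0, 0) x" by (rule w_nonneg)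
  qed
  finally show ?thesis .
qed


lemma coll_swap12: "coll a b c \<Longrightarrow> coll b a c"
  unfolding coll_def by algebra

lemma coll_swap23: "coll a b c \<Longrightarrow> coll a c b"
  unfolding coll_def by algebra

lemma w_sym: "w a b = w b a"
proof -
  have e: "fst a - fst b = -(fst b - fst a)" "snd a - snd b = -(snd b - snd a)" by simp_all
  show ?thesis unfolding w_def e by (simp only: gcd_neg1_int gcd_neg2_int abs_minus_cancel)
qed

definition offd :: "'a set \<Rightarrow> ('a \<times> 'a) set" where
  "offd A = {p \<in> A \<times> A. fst p \<noteq> snd p}"

definition Psi :: "(int \<times> int) set \<Rightarrow> real" where
  "Psi A = (\<Sum>p\<in>offd A. w (fst p) (snd p))"

lemma finite_offd[simp]: "finite A \<Longrightarrow> finite (offd A)"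
  unfolding offd_def by simp

lemma card_offd_le: "finite A \<Longrightarrow> card (offd A) \<le> card A ^ 2"
proof -
  assume "finite A"
  then have "card (offd A) \<le> card (A \<times> A)" unfolding offd_def by (intro card_mono) auto
  then show ?thesis by (simp add: card_cartesian_product power2_eq_square)
qed

definition sq :: "int \<Rightarrow> nat \<Rightarrow> (int \<times> int) set" where
  "sq x0 N = {x0+1..x0+int N} \<times> {x0+1..x0+int N}"

lemma finite_sq[simp]: "finite (sq x0 N)" by (simp add: sq_def)
lemma card_sq: "card (sq x0 N) = N^2" by (simp add: sq_def card_cartesian_product power2_eq_square)

lemma pair_count:
  assumes "\<And>c. c \<in> sq x0 N \<Longrightarrow> nrm (c - a) \<le> D"
  shows "real (card {p \<in> sq x0 N \<times> sq x0 N. fst p \<noteq> a \<and> snd p \<noteq> a \<and> fst p \<noteq> snd p \<and> coll a (fst p) (snd p)})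
         \<le> real N * Gam D + real N ^ 2"
proof -
  let ?B = "sq x0 N"
  have sub: "{p \<in> ?B \<times> ?B. fst p \<noteq> a \<and> snd p \<noteq> a \<and> fst p \<noteq> snd p \<and> coll a (fst p) (snd p)}
      \<subseteq> Sigma (?B - {a}) (\<lambda>b. {c \<in> ?B. coll a b c})" by auto
  have "card {p \<in> ?B \<times> ?B. fst p \<noteq> a \<and> snd p \<noteq> a \<and> fst p \<noteq> snd p \<and> coll a (fst p) (snd p)}
      \<le> card (Sigma (?B - {a}) (\<lambda>b. {c \<in> ?B. coll a b c}))"
    by (rule card_mono[OF _ sub]) (simp add: finite_SigmaI)
  also have "\<dots> = (\<Sum>b\<in>?B - {a}. card {c \<in> ?B. coll a b c})"
    by (rule card_SigmaI) auto
  finally have "real (card {p \<in> ?B \<times> ?B. fst p \<noteq> a \<and> snd p \<noteq> a \<and> fst p \<noteq> snd p \<and> coll a (fst p) (snd p)})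
      \<le> (\<Sum>b\<in>?B - {a}. real (card {c \<in> ?B. coll a b c}))"
    by (simp flip: of_nat_sum)
  also have "\<dots> \<le> (\<Sum>b\<in>?B - {a}. real N * w a b + 1)"
  proof (rule sum_mono)
    fix b assume "b \<in> ?B - {a}"
    then have "a \<noteq> b" by auto
    then show "real (card {c \<in> ?B. coll a b c}) \<le> real N * w a b + 1"
      unfolding sq_def by (rule line_count)
  qed
  also have "\<dots> = real N * (\<Sum>b\<in>?B - {a}. w a b) + real (card (?B - {a}))"
    by (simp add: sum.distrib sum_distrib_left)
  also have "\<dots> \<le> real N * Gam D + real N ^ 2"
  proof -
    have "(\<Sum>b\<in>?B - {a}. w a b) \<le> Gam D" by (rule sum_w_le_Gam) (auto simp: assms)
    moreover have "card (?B - {a}) \<le> N^2"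
      using card_mono[of ?B "?B - {a}"] card_sq[of x0 N] by auto
    ultimately show ?thesis
      by (intro add_mono mult_left_mono) (auto simp flip: of_nat_power)
  qed
  finally show ?thesis .
qed

lemma kill_count:
  assumes "finite S"
  shows "real (card {c \<in> sq x0 N. \<exists>a\<in>S. \<exists>b\<in>S. a \<noteq> b \<and> coll a b c})
         \<le> real N * Psi S + real (card S) ^ 2"
proof -
  let ?B = "sq x0 N"
  have sub: "{c \<in> ?B. \<exists>a\<in>S. \<exists>b\<in>S. a \<noteq> b \<and> coll a b c} \<subseteq> (\<Union>p\<in>offd S. {c \<in> ?B. coll (fst p) (snd p) c})"
    unfolding offd_def by auto
  have "card {c \<in> ?B. \<exists>a\<in>S. \<exists>b\<in>S. a \<noteq> b \<and> coll a b c} \<le> card (\<Union>p\<in>offd S. {c \<in> ?B. coll (fst p) (snd p) c})"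
    by (rule card_mono[OF _ sub]) (use assms in simp)
  also have "\<dots> \<le> (\<Sum>p\<in>offd S. card {c \<in> ?B. coll (fst p) (snd p) c})"
    by (rule card_UN_le) (use assms in simp)
  finally have "real (card {c \<in> ?B. \<exists>a\<in>S. \<exists>b\<in>S. a \<noteq> b \<and> coll a b c})
      \<le> (\<Sum>p\<in>offd S. real (card {c \<in> ?B. coll (fst p) (snd p) c}))"
    by (simp flip: of_nat_sum)
  also have "\<dots> \<le> (\<Sum>p\<in>offd S. real N * w (fst p) (snd p) + 1)"
  proof (rule sum_mono)
    fix p assume "p \<in> offd S"
    then have "fst p \<noteq> snd p" unfolding offd_def by auto
    then show "real (card {c \<in> ?B. coll (fst p) (snd p) c}) \<le> real N * w (fst p) (snd p) + 1"
      unfolding sq_def by (rule line_count)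
  qed
  also have "\<dots> = real N * Psi S + real (card (offd S))"
    unfolding Psi_def by (simp add: sum.distrib sum_distrib_left)
  also have "\<dots> \<le> real N * Psi S + real (card S) ^ 2"
    using card_offd_le[OF assms] by (simp flip: of_nat_power)
  finally show ?thesis .
qed


lemma binom_ratio:
  assumes "r \<le> s" "s \<le> n"
  shows "real ((n - r) choose (s - r)) * real n ^ r \<le> real (n choose s) * real s ^ r"
  using assms(1)
proof (induction r)
  case 0 then show ?case by simp
next
  case (Suc r)
  have rs: "r < s" using Suc.prems by simp
  have IH: "real ((n - r) choose (s - r)) * real n ^ r \<le> real (n choose s) * real s ^ r"
    using Suc.IH rs by simp
  have id: "(s - r) * ((n - r) choose (s - r)) = (n - r) * ((n - r - 1) choose (s - r - 1))"
    using rs by (intro times_binomial_minus1_eq) simp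
  have nr: "real (n - r) > 0" using rs assms(2) by simp
  have e1: "real ((n - Suc r) choose (s - Suc r)) = real ((n - r) choose (s - r)) * real (s - r) / real (n - r)"
  proof -
    have "real (s - r) * real ((n - r) choose (s - r)) = real (n - r) * real ((n - r - 1) choose (s - r - 1))"
      using id by (metis of_nat_mult)
    then show ?thesis using nr by (simp add: field_simps)
  qed
  have rr: "real r * real s \<le> real n * real r"
  proof -
    have "real r * real s \<le> real r * real n" using assms(2) by (intro mult_left_mono) auto
    then show ?thesis by (simp add: mult.commute)
  qed
  have key: "real n * real (s - r) \<le> real s * real (n - r)"
    using rs assms(2) rr by (simp add: of_nat_diff algebra_simps)
  have "real ((n - Suc r) choose (s - Suc r)) * real n ^ Suc r
      = (real ((n - r) choose (s - r)) * real n ^ r) * (real n * real (s - r) / real (n - r))"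
    unfolding e1 by (simp add: field_simps)
  also have "\<dots> \<le> (real (n choose s) * real s ^ r) * (real n * real (s - r) / real (n - r))"
    using IH nr by (intro mult_right_mono) auto
  also have "\<dots> \<le> (real (n choose s) * real s ^ r) * real s"
  proof (rule mult_left_mono)
    show "real n * real (s - r) / real (n - r) \<le> real s" using key nr by (simp add: field_simps)
  qed simp
  also have "\<dots> = real (n choose s) * real s ^ Suc r" by simp
  finally show ?case .
qed

lemma card_subsets_containing:
  assumes U: "finite U" and E: "E \<subseteq> U" "card E \<le> s"
  shows "card {T. T \<subseteq> U \<and> card T = s \<and> E \<subseteq> T} = (card U - card E) choose (s - card E)"
proof -
  have finE: "finite E" using E U finite_subset by blast
  have bij: "bij_betw (\<lambda>T. T - E) {T. T \<subseteq> U \<and> card T = s \<and> E \<subseteq> T} {T'. T' \<subseteq> U - E \<and> card T' = s - card E}"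
  proof (rule bij_betw_byWitness[where f' = "\<lambda>T'. T' \<union> E"])
    show "\<forall>T\<in>{T. T \<subseteq> U \<and> card T = s \<and> E \<subseteq> T}. T - E \<union> E = T" by auto
    show "\<forall>T'\<in>{T'. T' \<subseteq> U - E \<and> card T' = s - card E}. T' \<union> E - E = T'" by auto
    show "(\<lambda>T. T - E) ` {T. T \<subseteq> U \<and> card T = s \<and> E \<subseteq> T} \<subseteq> {T'. T' \<subseteq> U - E \<and> card T' = s - card E}"
    proof safe
      fix T x assume "T \<subseteq> U" "E \<subseteq> T" "x \<in> T" "x \<notin> E"
      then show "x \<in> U" by auto
    next
      fix T assume "T \<subseteq> U" "E \<subseteq> T" "s = card T"
      then show "card (T - E) = card T - card E"
        using finite_subset[OF _ U] by (simp add: card_Diff_subset finite_subset)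
    qed
    show "(\<lambda>T'. T' \<union> E) ` {T'. T' \<subseteq> U - E \<and> card T' = s - card E} \<subseteq> {T. T \<subseteq> U \<and> card T = s \<and> E \<subseteq> T}"
    proof
      fix X assume "X \<in> (\<lambda>T'. T' \<union> E) ` {T'. T' \<subseteq> U - E \<and> card T' = s - card E}"
      then obtain T' where T': "T' \<subseteq> U - E" "card T' = s - card E" "X = T' \<union> E" by auto
      have fT: "finite T'" using T'(1) U by (meson finite_Diff finite_subset)
      have "T' \<inter> E = {}" using T'(1) by auto
      then have "card X = card T' + card E" using T'(3) fT finE by (simp add: card_Un_disjoint)
      then have "card X = s" using T'(2) E(2) by simp
      then show "X \<in> {T. T \<subseteq> U \<and> card T = s \<and> E \<subseteq> T}" using T'(1,3) E(1) by auto
    qed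
  qed
  have "card {T. T \<subseteq> U \<and> card T = s \<and> E \<subseteq> T} = card {T'. T' \<subseteq> U - E \<and> card T' = s - card E}"
    by (rule bij_betw_same_card[OF bij])
  also have "\<dots> = card (U - E) choose (s - card E)" by (rule n_subsets) (use U in simp)
  also have "card (U - E) = card U - card E" using E(1) finE by (simp add: card_Diff_subset)
  finally show ?thesis .
qed

lemma subsets_containing_le:
  assumes U: "finite U" and E: "E \<subseteq> U" and n: "card U = n" and s: "s \<le> n"
  shows "real (card {T. T \<subseteq> U \<and> card T = s \<and> E \<subseteq> T}) * real n ^ card E
         \<le> real (card {T. T \<subseteq> U \<and> card T = s}) * real s ^ card E"
proof (cases "card E \<le> s")
  case True
  have "real (card {T. T \<subseteq> U \<and> card T = s \<and> E \<subseteq> T}) * real n ^ card E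
       = real ((n - card E) choose (s - card E)) * real n ^ card E"
    using card_subsets_containing[OF U E True] n by simp
  also have "\<dots> \<le> real (n choose s) * real s ^ card E" by (rule binom_ratio[OF True s])
  also have "\<dots> = real (card {T. T \<subseteq> U \<and> card T = s}) * real s ^ card E"
    using n_subsets[OF U, of s] n by simp
  finally show ?thesis .
next
  case False
  have "{T. T \<subseteq> U \<and> card T = s \<and> E \<subseteq> T} = {}"
  proof (rule ccontr)
    assume "{T. T \<subseteq> U \<and> card T = s \<and> E \<subseteq> T} \<noteq> {}"
    then obtain T where "T \<subseteq> U" "card T = s" "E \<subseteq> T" by auto
    then have "card E \<le> s" using card_mono[of T E] U finite_subset by blast
    then show False using False by simp
  qed
  then have "card {T. T \<subseteq> U \<and> card T = s \<and> E \<subseteq> T} = 0" by (simp only: card.empty)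
  then show ?thesis by simp
qed

lemma averaging:
  fixes el :: "'b \<Rightarrow> 'a set" and f :: "'b \<Rightarrow> real"
  assumes U: "finite U" and n: "card U = n" "n > 0" and s: "s \<le> n"
    and P: "finite P" and el: "\<And>p. p \<in> P \<Longrightarrow> el p \<subseteq> U \<and> card (el p) = r"
    and f: "\<And>p. p \<in> P \<Longrightarrow> f p \<ge> 0"
  shows "(\<Sum>T\<in>{T. T \<subseteq> U \<and> card T = s}. \<Sum>p\<in>{p\<in>P. el p \<subseteq> T}. f p)
         \<le> real (card {T. T \<subseteq> U \<and> card T = s}) * (real s / real n) ^ r * (\<Sum>p\<in>P. f p)"
proof -
  let ?TT = "{T. T \<subseteq> U \<and> card T = s}"
  have finTT: "finite ?TT" using U by (simp add: finite_Collect_subsets)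
  have "(\<Sum>T\<in>?TT. \<Sum>p\<in>{p\<in>P. el p \<subseteq> T}. f p) = (\<Sum>T\<in>?TT. \<Sum>p\<in>P. if el p \<subseteq> T then f p else 0)"
    using P by (simp add: sum.inter_filter)
  also have "\<dots> = (\<Sum>p\<in>P. \<Sum>T\<in>?TT. if el p \<subseteq> T then f p else 0)"
    by (rule sum.swap)
  also have "\<dots> = (\<Sum>p\<in>P. f p * real (card {T. T \<subseteq> U \<and> card T = s \<and> el p \<subseteq> T}))"
  proof (rule sum.cong[OF refl])
    fix p assume "p \<in> P"
    have "(\<Sum>T\<in>?TT. if el p \<subseteq> T then f p else 0) = (\<Sum>T\<in>{T\<in>?TT. el p \<subseteq> T}. f p)"
      by (rule sum.inter_filter[symmetric]) (rule finTT)
    also have "\<dots> = f p * real (card {T\<in>?TT. el p \<subseteq> T})" by simp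
    also have "{T\<in>?TT. el p \<subseteq> T} = {T. T \<subseteq> U \<and> card T = s \<and> el p \<subseteq> T}" by auto
    finally show "(\<Sum>T\<in>?TT. if el p \<subseteq> T then f p else 0) = f p * real (card {T. T \<subseteq> U \<and> card T = s \<and> el p \<subseteq> T})" .
  qed
  also have "\<dots> \<le> (\<Sum>p\<in>P. f p * (real (card ?TT) * (real s / real n) ^ r))"
  proof (rule sum_mono)
    fix p assume p: "p \<in> P"
    have "real (card {T. T \<subseteq> U \<and> card T = s \<and> el p \<subseteq> T}) * real n ^ r \<le> real (card ?TT) * real s ^ r"
      using subsets_containing_le[OF U _ n(1) s, of "el p"] el[OF p] by auto
    then have "real (card {T. T \<subseteq> U \<and> card T = s \<and> el p \<subseteq> T}) \<le> real (card ?TT) * (real s / real n) ^ r"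
      using n(2) by (simp add: field_simps power_divide)
    then show "f p * real (card {T. T \<subseteq> U \<and> card T = s \<and> el p \<subseteq> T}) \<le> f p * (real (card ?TT) * (real s / real n) ^ r)"
      using f[OF p] by (rule mult_left_mono)
  qed
  also have "\<dots> = real (card ?TT) * (real s / real n) ^ r * (\<Sum>p\<in>P. f p)"
    by (simp add: sum_distrib_left sum_distrib_right mult_ac)
  finally show ?thesis .
qed


definition gp' :: "(int \<times> int) set \<Rightarrow> bool" where
  "gp' A \<longleftrightarrow> (\<forall>a\<in>A. \<forall>b\<in>A. \<forall>c\<in>A. a \<noteq> b \<longrightarrow> a \<noteq> c \<longrightarrow> b \<noteq> c \<longrightarrow> \<not> coll a b c)"

lemma coll_perms:
  assumes "coll a b c"
  shows "coll b a c" "coll a c b" "coll b c a" "coll c a b" "coll c b a"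
  using assms coll_swap12 coll_swap23 by blast+

lemma sum_union_le:
  fixes f :: "'a \<Rightarrow> real"
  assumes "finite A" "finite B" "\<And>x. x \<in> A \<union> B \<Longrightarrow> f x \<ge> 0"
  shows "sum f (A \<union> B) \<le> sum f A + sum f B"
proof -
  have "sum f (A \<inter> B) \<ge> 0" using assms(3) by (intro sum_nonneg) auto
  then show ?thesis using sum_Un[OF assms(1,2), of f] by simp
qed

lemma nrm_bound:
  assumes "a \<in> sq 0 (2*N) " "c \<in> sq 0 (2*N)"
  shows "nrm (c - a) \<le> int (2*N)"
  using assms unfolding sq_def nrm_def by auto

lemma gpS_markov:
  fixes TT :: "'a set" and phi :: "'a \<Rightarrow> real"
  assumes "finite TT" "TT \<noteq> {}" "(\<Sum>T\<in>TT. phi T) < real (card TT)"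
  shows "\<exists>T\<in>TT. phi T < 1"
proof (rule ccontr)
  assume "\<not> (\<exists>T\<in>TT. phi T < 1)"
  then have "\<forall>T\<in>TT. 1 \<le> phi T" by auto
  then have "(\<Sum>T\<in>TT. (1::real)) \<le> (\<Sum>T\<in>TT. phi T)" by (intro sum_mono) auto
  then show False using assms(3) by simp
qed

lemma psi_union:
  assumes finS: "finite S" and TU: "T' \<subseteq> T" "T \<subseteq> U" and finU: "finite U" and SU: "S \<inter> U = {}"
  shows "Psi (S \<union> T') \<le> Psi S + (\<Sum>p\<in>{p\<in>offd U. {fst p, snd p} \<subseteq> T}. w (fst p) (snd p))
                          + (\<Sum>p\<in>{p\<in>S \<times> U. {snd p} \<subseteq> T}. 2 * w (fst p) (snd p))"
proof -
  have finT': "finite T'" using TU finU finite_subset by blast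
  let ?f = "\<lambda>p. w (fst p) (snd p)"
  have ST: "x \<notin> T'" if "x \<in> S" for x using SU TU that by blast
  have eq: "offd (S \<union> T') = (offd S \<union> offd T') \<union> ((S \<times> T') \<union> (T' \<times> S))"
    using ST unfolding offd_def by auto
  have nn: "\<And>p. 0 \<le> ?f p" by (rule w_nonneg)
  have "Psi (S \<union> T') = sum ?f ((offd S \<union> offd T') \<union> ((S \<times> T') \<union> (T' \<times> S)))"
    unfolding Psi_def eq ..
  also have "\<dots> \<le> sum ?f (offd S \<union> offd T') + sum ?f ((S \<times> T') \<union> (T' \<times> S))"
    by (rule sum_union_le) (use finS finT' nn in auto)
  also have "sum ?f (offd S \<union> offd T') \<le> sum ?f (offd S) + sum ?f (offd T')"
    by (rule sum_union_le) (use finS finT' nn in auto)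
  also have "sum ?f ((S \<times> T') \<union> (T' \<times> S)) \<le> sum ?f (S \<times> T') + sum ?f (T' \<times> S)"
    by (rule sum_union_le) (use finS finT' nn in auto)
  also have "sum ?f (T' \<times> S) = sum ?f (S \<times> T')"
  proof (rule sum.reindex_bij_witness[where i = "\<lambda>p. (snd p, fst p)" and j = "\<lambda>p. (snd p, fst p)"])
  qed (auto simp: w_sym)
  also have "sum ?f (offd T') \<le> (\<Sum>p\<in>{p\<in>offd U. {fst p, snd p} \<subseteq> T}. ?f p)"
    by (rule sum_mono2) (use finU TU nn in \<open>auto simp: offd_def\<close>)
  also have "sum ?f (S \<times> T') + sum ?f (S \<times> T') \<le> (\<Sum>p\<in>{p\<in>S \<times> U. {snd p} \<subseteq> T}. 2 * ?f p)"
  proof -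
    have "sum ?f (S \<times> T') + sum ?f (S \<times> T') = (\<Sum>p\<in>S \<times> T'. 2 * ?f p)"
      by (simp add: sum_distrib_left[symmetric])
    also have "\<dots> \<le> (\<Sum>p\<in>{p\<in>S \<times> U. {snd p} \<subseteq> T}. 2 * ?f p)"
      by (rule sum_mono2) (use finU finS TU nn in auto)
    finally show ?thesis .
  qed
  finally show ?thesis unfolding Psi_def by simp
qed

lemma prune:
  assumes finT: "finite T" and TU: "T \<subseteq> U" and SU: "S \<inter> U = {}" and gpS: "gp' S"
  defines "K \<equiv> {c \<in> U. \<exists>a\<in>S. \<exists>b\<in>S. a \<noteq> b \<and> coll a b c}"
    and "P2 \<equiv> {p \<in> U \<times> U. fst p \<noteq> snd p \<and> (\<exists>a\<in>S. coll a (fst p) (snd p))}"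
    and "P3 \<equiv> Sigma U (\<lambda>a. {p \<in> U \<times> U. fst p \<noteq> a \<and> snd p \<noteq> a \<and> fst p \<noteq> snd p \<and> coll a (fst p) (snd p)})"
  shows "\<exists>T'. T' \<subseteq> T \<and> gp' (S \<union> T') \<and>
    real (card T) \<le> real (card T') + ((\<Sum>c\<in>{c\<in>K. {c} \<subseteq> T}. 1) + (\<Sum>p\<in>{p\<in>P2. {fst p, snd p} \<subseteq> T}. 2)
       + (\<Sum>q\<in>{q\<in>P3. {fst q, fst (snd q), snd (snd q)} \<subseteq> T}. 3))"
proof -
  define A1 where "A1 = {c\<in>K. {c} \<subseteq> T}"
  define A2 where "A2 = {p\<in>P2. {fst p, snd p} \<subseteq> T}"
  define A3 where "A3 = {q\<in>P3. {fst q, fst (snd q), snd (snd q)} \<subseteq> T}"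
  have fA1: "finite A1" unfolding A1_def using finT by (rule rev_finite_subset) auto
  have fA2: "finite A2" unfolding A2_def using finite_cartesian_product[OF finT finT]
    by (rule rev_finite_subset) auto
  have fA3: "finite A3" unfolding A3_def using finite_cartesian_product[OF finT finite_cartesian_product[OF finT finT]]
    by (rule rev_finite_subset) auto
  define Bad where "Bad = A1 \<union> (fst ` A2 \<union> snd ` A2) \<union> (fst ` A3 \<union> (fst \<circ> snd) ` A3 \<union> (snd \<circ> snd) ` A3)"
  define T' where "T' = T - Bad"
  have cB: "card Bad \<le> card A1 + (card A2 + card A2) + (card A3 + card A3 + card A3)"
  proof -
    have "card Bad \<le> card A1 + card (fst ` A2 \<union> snd ` A2) + card (fst ` A3 \<union> (fst \<circ> snd) ` A3 \<union> (snd \<circ> snd) ` A3)"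
      unfolding Bad_def by (meson card_Un_le add_le_mono order.trans le_refl)
    also have "card (fst ` A2 \<union> snd ` A2) \<le> card A2 + card A2"
      by (meson card_Un_le card_image_le fA2 add_le_mono order.trans)
    also have "card (fst ` A3 \<union> (fst \<circ> snd) ` A3 \<union> (snd \<circ> snd) ` A3) \<le> card A3 + card A3 + card A3"
      by (meson card_Un_le card_image_le fA3 add_le_mono order.trans)
    finally show ?thesis by simp
  qed
  have "card T - card Bad \<le> card T'" unfolding T'_def by (rule diff_card_le_card_Diff) (simp add: Bad_def fA1 fA2 fA3)
  then have c1: "real (card T) \<le> real (card T') + real (card Bad)" by linarith
  have sums: "(\<Sum>c\<in>A1. 1) + (\<Sum>p\<in>A2. 2) + (\<Sum>q\<in>A3. 3) = real (card A1) + 2 * real (card A2) + 3 * real (card A3)"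
    by simp
  have T'T: "T' \<subseteq> T" unfolding T'_def by auto
  have ST': "S \<inter> T' = {}" using SU TU T'T by auto
  have n1: "\<not> coll x y z" if "x \<in> S" "y \<in> S" "z \<in> T'" "x \<noteq> y" for x y z
  proof
    assume "coll x y z"
    then have "z \<in> A1" using that TU T'T unfolding A1_def K_def by auto
    then show False using that(3) unfolding T'_def Bad_def by auto
  qed
  have n2: "\<not> coll x y z" if "x \<in> S" "y \<in> T'" "z \<in> T'" "y \<noteq> z" for x y z
  proof
    assume "coll x y z"
    then have "(y, z) \<in> A2" using that TU T'T unfolding A2_def P2_def by auto
    then have "y \<in> fst ` A2" by force
    then show False using that(2) unfolding T'_def Bad_def by auto
  qed
  have n3: "\<not> coll x y z" if "x \<in> T'" "y \<in> T'" "z \<in> T'" "x \<noteq> y" "x \<noteq> z" "y \<noteq> z" for x y z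
  proof
    assume "coll x y z"
    then have "(x, (y, z)) \<in> A3" using that TU T'T unfolding A3_def P3_def by auto
    then have "x \<in> fst ` A3" by force
    then show False using that(1) unfolding T'_def Bad_def by auto
  qed
  have gp: "gp' (S \<union> T')"
    unfolding gp'_def
  proof (intro ballI impI notI)
    fix a b c assume abc: "a \<in> S \<union> T'" "b \<in> S \<union> T'" "c \<in> S \<union> T'" "a \<noteq> b" "a \<noteq> c" "b \<noteq> c" and co: "coll a b c"
    note P = coll_perms[OF co]
    show False
    proof (cases "a \<in> S")
      case aS: True
      show False
      proof (cases "b \<in> S")
        case bS: True
        show False
        proof (cases "c \<in> S")
          case True then show False using gpS aS bS abc co unfolding gp'_def by blast
        next
          case False then show False using n1[of a b c] aS bS abc co by blast
        qed
      next
        case bT: False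
        show False
        proof (cases "c \<in> S")
          case True then show False using n1[of a c b] aS bT abc P by blast
        next
          case False then show False using n2[of a b c] aS bT abc co by blast
        qed
      qed
    next
      case aT: False
      show False
      proof (cases "b \<in> S")
        case bS: True
        show False
        proof (cases "c \<in> S")
          case True then show False using n1[of b c a] bS aT abc P by blast
        next
          case False then show False using n2[of b a c] bS aT abc P by blast
        qed
      next
        case bT: False
        show False
        proof (cases "c \<in> S")
          case True then show False using n2[of c a b] aT bT abc P by blast
        next
          case False then show False using n3[of a b c] aT bT abc co by blast
        qed
      qed
    qed
  qed
  show ?thesis
  proof (intro exI conjI)
    show "T' \<subseteq> T" by (rule T'T)
    show "gp' (S \<union> T')" by (rule gp)
    show "real (card T) \<le> real (card T') + ((\<Sum>c\<in>{c\<in>K. {c} \<subseteq> T}. 1) + (\<Sum>p\<in>{p\<in>P2. {fst p, snd p} \<subseteq> T}. 2)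
       + (\<Sum>q\<in>{q\<in>P3. {fst q, fst (snd q), snd (snd q)} \<subseteq> T}. 3))"
      using c1 cB sums unfolding A1_def A2_def A3_def by simp
  qed
qed


lemma block_exists:
  fixes k s :: nat and S :: "(int \<times> int) set" and M P :: real
  assumes finS: "finite S" and Ssub: "S \<subseteq> sq 0 (2^k)" and gpS: "gp' S"
    and cardS: "real (card S) \<le> M" and PsiS: "Psi S \<le> P" and sle: "s \<le> 4^k"
    and cond: "s > 0 \<Longrightarrow> (2^k * P + M^2) / 4^k + 2 * real s * M * (16 * (real k + 2) + 1) / 4^k
                 + 3 * real s ^ 2 * (16 * (real k + 2) + 1) / 4^k \<le> 1/4"
  shows "\<exists>T'. T' \<subseteq> sq (2^k) (2^k) \<and> gp' (S \<union> T') \<and> s \<le> 2 * card T' \<and> card T' \<le> s \<and>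
     Psi (S \<union> T') \<le> Psi S + 4 * (16 * (real k + 2) * real s * (real s + 2*M) / 2^k + 1)"
proof (cases "s = 0")
  case True
  show ?thesis by (rule exI[of _ "{}"]) (use gpS True in simp)
next
  case False
  hence spos: "s > 0" by simp
  define N :: nat where "N = 2^k"
  define \<gamma> :: real where "\<gamma> = 16 * (real k + 2)"
  define U where "U = sq (int N) N"
  define n :: nat where "n = N^2"
  have Npos: "N > 0" unfolding N_def by simp
  have rN: "real N = 2^k" unfolding N_def by simp
  have rn: "real n = 4^k" unfolding n_def N_def by (simp flip: power_mult_distrib power_mult add: power2_eq_square)
  have rnN: "real n = real N ^ 2" unfolding n_def by simp
  have npos: "n > 0" using Npos unfolding n_def by simp
  have finU: "finite U" unfolding U_def by simp
  have cardU: "card U = n" unfolding U_def n_def by (rule card_sq)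
  have sn: "s \<le> n" using sle rn by (metis of_nat_le_iff of_nat_numeral of_nat_power)
  have M0: "0 \<le> M" using cardS by linarith
  have g0: "0 \<le> \<gamma>" unfolding \<gamma>_def by simp
  have SU: "S \<inter> U = {}" using Ssub unfolding U_def sq_def N_def by auto
  have S2: "S \<subseteq> sq 0 (2*N)" using Ssub unfolding sq_def N_def by auto
  have U2: "U \<subseteq> sq 0 (2*N)" unfolding U_def sq_def by auto
  define G where "G = Gam (int (2*N))"
  have Gb: "G \<le> \<gamma> * real N"
  proof -
    have "int (2*N) = 2 ^ Suc k" unfolding N_def by simp
    then have "G = Gam (2 ^ Suc k)" unfolding G_def by simp
    also have "\<dots> \<le> 8 * 2 ^ Suc k * (real (Suc k) + 1)" by (rule gam_bound)
    also have "\<dots> = \<gamma> * real N" unfolding \<gamma>_def rN by simp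
    finally show ?thesis .
  qed
  have G0: "0 \<le> G" unfolding G_def Gam_def by (intro sum_nonneg w_nonneg)
  define pairs where "pairs a = {p \<in> U \<times> U. fst p \<noteq> a \<and> snd p \<noteq> a \<and> fst p \<noteq> snd p \<and> coll a (fst p) (snd p)}" for a
  have finpairs: "finite (pairs a)" for a unfolding pairs_def using finU by simp
  have pcb: "real N * G + real N ^ 2 \<le> real n * (\<gamma> + 1)"
  proof -
    have "real N * G \<le> real N * (\<gamma> * real N)" using Gb by (intro mult_left_mono) auto
    then show ?thesis unfolding rnN by (simp add: algebra_simps power2_eq_square)
  qed
  have pc: "real (card (pairs a)) \<le> real n * (\<gamma> + 1)" if aN: "a \<in> sq 0 (2*N)" for a
  proof -
    have "real (card (pairs a)) \<le> real N * G + real N ^ 2"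
      unfolding pairs_def U_def G_def
    proof (rule pair_count)
      fix c assume "c \<in> sq (int N) N"
      then have "c \<in> sq 0 (2*N)" using U2 unfolding U_def by blast
      then show "nrm (c - a) \<le> int (2*N)" by (rule nrm_bound[OF aN])
    qed
    then show ?thesis using pcb by linarith
  qed
  define K where "K = {c \<in> U. \<exists>a\<in>S. \<exists>b\<in>S. a \<noteq> b \<and> coll a b c}"
  define P2 where "P2 = {p \<in> U \<times> U. fst p \<noteq> snd p \<and> (\<exists>a\<in>S. coll a (fst p) (snd p))}"
  define P3 where "P3 = Sigma U pairs"
  have finK: "finite K" unfolding K_def using finU by simp
  have finP2: "finite P2" unfolding P2_def using finU by simp
  have finP3: "finite P3" unfolding P3_def using finU finpairs by simp
  have Kb: "real (card K) \<le> real N * P + M^2"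
  proof -
    have "real (card K) \<le> real N * Psi S + real (card S) ^ 2"
      unfolding K_def U_def by (rule kill_count[OF finS])
    also have "\<dots> \<le> real N * P + M^2"
      using PsiS cardS by (intro add_mono mult_left_mono power_mono) auto
    finally show ?thesis .
  qed
  have P2b: "real (card P2) \<le> M * (real n * (\<gamma> + 1))"
  proof -
    have "P2 \<subseteq> (\<Union>a\<in>S. pairs a)"
    proof
      fix p assume "p \<in> P2"
      then obtain a where a: "a \<in> S" "p \<in> U \<times> U" "fst p \<noteq> snd p" "coll a (fst p) (snd p)"
        unfolding P2_def by auto
      have "fst p \<noteq> a" "snd p \<noteq> a" using a(1,2) SU by auto
      then show "p \<in> (\<Union>a\<in>S. pairs a)" using a unfolding pairs_def by auto
    qed
    then have "card P2 \<le> card (\<Union>a\<in>S. pairs a)" by (intro card_mono) (use finS finpairs in auto)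
    also have "\<dots> \<le> (\<Sum>a\<in>S. card (pairs a))" by (rule card_UN_le[OF finS])
    finally have "real (card P2) \<le> (\<Sum>a\<in>S. real (card (pairs a)))" by (simp flip: of_nat_sum)
    also have "\<dots> \<le> (\<Sum>a\<in>S. real n * (\<gamma> + 1))" by (rule sum_mono) (use pc S2 in auto)
    also have "\<dots> = real (card S) * (real n * (\<gamma> + 1))" by simp
    also have "\<dots> \<le> M * (real n * (\<gamma> + 1))" using cardS g0 by (intro mult_right_mono) auto
    finally show ?thesis .
  qed
  have P3b: "real (card P3) \<le> real n * (real n * (\<gamma> + 1))"
  proof -
    have "card P3 = (\<Sum>a\<in>U. card (pairs a))" unfolding P3_def by (rule card_SigmaI[OF finU]) (simp add: finpairs)
    then have "real (card P3) = (\<Sum>a\<in>U. real (card (pairs a)))" by simp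
    also have "\<dots> \<le> (\<Sum>a\<in>U. real n * (\<gamma> + 1))" by (rule sum_mono) (use pc U2 in auto)
    also have "\<dots> = real n * (real n * (\<gamma> + 1))" using cardU by simp
    finally show ?thesis .
  qed
  have Y2b: "(\<Sum>p\<in>offd U. w (fst p) (snd p)) \<le> real n * G"
  proof -
    have "offd U = Sigma U (\<lambda>b. U - {b})" unfolding offd_def by auto
    then have "(\<Sum>p\<in>offd U. w (fst p) (snd p)) = (\<Sum>b\<in>U. \<Sum>c\<in>U - {b}. w b c)"
      using finU by (simp add: sum.Sigma split_beta)
    also have "\<dots> \<le> (\<Sum>b\<in>U. G)"
    proof (rule sum_mono)
      fix b assume "b \<in> U"
      then show "(\<Sum>c\<in>U - {b}. w b c) \<le> G" unfolding G_def
        by (intro sum_w_le_Gam finU) (use U2 nrm_bound in blast)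
    qed
    also have "\<dots> = real n * G" using cardU by simp
    finally show ?thesis .
  qed
  have Y1b: "(\<Sum>p\<in>S \<times> U. 2 * w (fst p) (snd p)) \<le> 2 * M * G"
  proof -
    have "(\<Sum>p\<in>S \<times> U. 2 * w (fst p) (snd p)) = (\<Sum>a\<in>S. \<Sum>b\<in>U. 2 * w a b)"
      by (simp add: sum.cartesian_product split_beta)
    also have "\<dots> \<le> (\<Sum>a\<in>S. 2 * G)"
    proof (rule sum_mono)
      fix a assume aS: "a \<in> S"
      have "U - {a} = U" using aS SU by auto
      then have "(\<Sum>b\<in>U. w a b) = (\<Sum>b\<in>U - {a}. w a b)" by simp
      also have "\<dots> \<le> G" unfolding G_def
        by (intro sum_w_le_Gam finU) (use U2 S2 aS nrm_bound in blast)
      finally show "(\<Sum>b\<in>U. 2 * w a b) \<le> 2 * G" by (simp add: sum_distrib_left[symmetric])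
    qed
    also have "\<dots> = real (card S) * (2 * G)" by simp
    also have "\<dots> \<le> M * (2 * G)" using cardS G0 by (intro mult_right_mono) auto
    finally show ?thesis by simp
  qed

  define TT where "TT = {T. T \<subseteq> U \<and> card T = s}"
  have finTT: "finite TT" unfolding TT_def using finU by (simp add: finite_Collect_subsets)
  have cardTT: "card TT = n choose s" unfolding TT_def using n_subsets[OF finU, of s] cardU by simp
  have TTne: "TT \<noteq> {}" using cardTT sn by (metis card.empty zero_less_binomial_iff less_irrefl)
  define \<rho> where "\<rho> = real s / real n"
  have rho0: "0 \<le> \<rho>" unfolding \<rho>_def by simp
  define X where "X T = (\<Sum>c\<in>{c\<in>K. {c} \<subseteq> T}. 1) + (\<Sum>p\<in>{p\<in>P2. {fst p, snd p} \<subseteq> T}. 2)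
        + (\<Sum>q\<in>{q\<in>P3. {fst q, fst (snd q), snd (snd q)} \<subseteq> T}. (3::real))" for T
  define Y where "Y T = (\<Sum>p\<in>{p\<in>offd U. {fst p, snd p} \<subseteq> T}. w (fst p) (snd p))
        + (\<Sum>p\<in>{p\<in>S \<times> U. {snd p} \<subseteq> T}. 2 * w (fst p) (snd p))" for T
  have X0: "0 \<le> X T" for T unfolding X_def by (intro add_nonneg_nonneg sum_nonneg) auto
  have Y0: "0 \<le> Y T" for T unfolding Y_def by (intro add_nonneg_nonneg sum_nonneg) (auto intro: w_nonneg)
  have AX1: "(\<Sum>T\<in>TT. \<Sum>c\<in>{c\<in>K. {c} \<subseteq> T}. 1) \<le> real (card TT) * \<rho> ^ 1 * (\<Sum>c\<in>K. 1)"
    unfolding TT_def \<rho>_def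
    by (rule averaging[OF finU cardU npos sn finK]) (auto simp: K_def)
  have AX2: "(\<Sum>T\<in>TT. \<Sum>p\<in>{p\<in>P2. {fst p, snd p} \<subseteq> T}. 2) \<le> real (card TT) * \<rho> ^ 2 * (\<Sum>p\<in>P2. 2)"
    unfolding TT_def \<rho>_def
    by (rule averaging[OF finU cardU npos sn finP2]) (auto simp: P2_def)
  have AX3: "(\<Sum>T\<in>TT. \<Sum>q\<in>{q\<in>P3. {fst q, fst (snd q), snd (snd q)} \<subseteq> T}. 3) \<le> real (card TT) * \<rho> ^ 3 * (\<Sum>q\<in>P3. 3)"
    unfolding TT_def \<rho>_def
    by (rule averaging[OF finU cardU npos sn finP3]) (auto simp: P3_def pairs_def)
  have AY2: "(\<Sum>T\<in>TT. \<Sum>p\<in>{p\<in>offd U. {fst p, snd p} \<subseteq> T}. w (fst p) (snd p))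
      \<le> real (card TT) * \<rho> ^ 2 * (\<Sum>p\<in>offd U. w (fst p) (snd p))"
    unfolding TT_def \<rho>_def
    by (rule averaging[OF finU cardU npos sn]) (auto simp: offd_def finU intro: w_nonneg)
  have AY1: "(\<Sum>T\<in>TT. \<Sum>p\<in>{p\<in>S \<times> U. {snd p} \<subseteq> T}. 2 * w (fst p) (snd p))
      \<le> real (card TT) * \<rho> ^ 1 * (\<Sum>p\<in>S \<times> U. 2 * w (fst p) (snd p))"
    unfolding TT_def \<rho>_def
    by (rule averaging[OF finU cardU npos sn]) (auto simp: finU finS intro: w_nonneg)
  define Q where "Q = (real N * P + M^2) / real n + 2 * real s * M * (\<gamma> + 1) / real n
                 + 3 * real s ^ 2 * (\<gamma> + 1) / real n"
  have Q4: "Q \<le> 1/4" using cond[OF spos] unfolding Q_def rN rn \<gamma>_def by simp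
  have SX: "(\<Sum>T\<in>TT. X T) \<le> real (card TT) * (real s * Q)"
  proof -
    have "(\<Sum>T\<in>TT. X T) \<le> real (card TT) * \<rho> ^ 1 * (\<Sum>c\<in>K. 1) + real (card TT) * \<rho> ^ 2 * (\<Sum>p\<in>P2. 2)
        + real (card TT) * \<rho> ^ 3 * (\<Sum>q\<in>P3. 3)"
      unfolding X_def sum.distrib using AX1 AX2 AX3 by linarith
    also have "\<dots> = real (card TT) * (\<rho> * real (card K) + 2 * \<rho>^2 * real (card P2) + 3 * \<rho>^3 * real (card P3))"
      by (simp add: algebra_simps)
    also have "\<dots> \<le> real (card TT) * (real s * Q)"
    proof (rule mult_left_mono)
      have nn: "real n > 0" using npos by simp
      have e1: "\<rho> * real (card K) \<le> \<rho> * (real N * P + M^2)" using Kb rho0 by (rule mult_left_mono)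
      have e2: "2 * \<rho>^2 * real (card P2) \<le> 2 * \<rho>^2 * (M * (real n * (\<gamma> + 1)))" using P2b rho0 by (intro mult_left_mono) auto
      have e3: "3 * \<rho>^3 * real (card P3) \<le> 3 * \<rho>^3 * (real n * (real n * (\<gamma> + 1)))" using P3b rho0 by (intro mult_left_mono) auto
      have "\<rho> * (real N * P + M^2) + 2 * \<rho>^2 * (M * (real n * (\<gamma> + 1))) + 3 * \<rho>^3 * (real n * (real n * (\<gamma> + 1)))
          = real s * Q"
        unfolding \<rho>_def Q_def using nn by (simp add: field_simps power2_eq_square power3_eq_cube)
      then show "\<rho> * real (card K) + 2 * \<rho>^2 * real (card P2) + 3 * \<rho>^3 * real (card P3) \<le> real s * Q"
        using e1 e2 e3 by linarith
    qed simp
    finally show ?thesis .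
  qed
  define EY where "EY = \<gamma> * real s * (real s + 2*M) / real N + 1"
  have EYpos: "EY > 0"
  proof -
    have "0 \<le> \<gamma> * real s * (real s + 2*M) / real N" using g0 M0 by simp
    then show ?thesis unfolding EY_def by linarith
  qed
  have SY: "(\<Sum>T\<in>TT. Y T) \<le> real (card TT) * EY"
  proof -
    have "(\<Sum>T\<in>TT. Y T) \<le> real (card TT) * \<rho> ^ 2 * (\<Sum>p\<in>offd U. w (fst p) (snd p))
         + real (card TT) * \<rho> ^ 1 * (\<Sum>p\<in>S \<times> U. 2 * w (fst p) (snd p))"
      unfolding Y_def sum.distrib using AY1 AY2 by linarith
    also have "\<dots> \<le> real (card TT) * (\<rho> ^ 2 * (real n * G) + \<rho> * (2 * M * G))"
    proof -
      have "\<rho> ^ 2 * (\<Sum>p\<in>offd U. w (fst p) (snd p)) \<le> \<rho> ^ 2 * (real n * G)"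
        using Y2b rho0 by (intro mult_left_mono) auto
      moreover have "\<rho> * (\<Sum>p\<in>S \<times> U. 2 * w (fst p) (snd p)) \<le> \<rho> * (2 * M * G)"
        using Y1b rho0 by (intro mult_left_mono) auto
      ultimately have "\<rho> ^ 2 * (\<Sum>p\<in>offd U. w (fst p) (snd p)) + \<rho> * (\<Sum>p\<in>S \<times> U. 2 * w (fst p) (snd p))
          \<le> \<rho> ^ 2 * (real n * G) + \<rho> * (2 * M * G)" by linarith
      then have "real (card TT) * (\<rho> ^ 2 * (\<Sum>p\<in>offd U. w (fst p) (snd p)) + \<rho> * (\<Sum>p\<in>S \<times> U. 2 * w (fst p) (snd p)))
          \<le> real (card TT) * (\<rho> ^ 2 * (real n * G) + \<rho> * (2 * M * G))" by (intro mult_left_mono) auto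
      then show ?thesis by (simp add: algebra_simps)
    qed
    also have "\<dots> \<le> real (card TT) * EY"
    proof (rule mult_left_mono)
      have nn: "real n > 0" using npos by simp
      have NN: "real N > 0" using Npos by simp
      have "\<rho> ^ 2 * (real n * G) \<le> \<rho> ^ 2 * (real n * (\<gamma> * real N))"
        using Gb rho0 nn by (intro mult_left_mono) auto
      moreover have "\<rho> * (2 * M * G) \<le> \<rho> * (2 * M * (\<gamma> * real N))"
        using Gb rho0 M0 by (intro mult_left_mono) auto
      moreover have "\<rho> ^ 2 * (real n * (\<gamma> * real N)) + \<rho> * (2 * M * (\<gamma> * real N)) = EY - 1"
        unfolding \<rho>_def EY_def rnN using NN by (simp add: field_simps power2_eq_square)
      ultimately show "\<rho> ^ 2 * (real n * G) + \<rho> * (2 * M * G) \<le> EY" by linarith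
    qed simp
    finally show ?thesis .
  qed
  define phi where "phi T = 2 * X T / real s + Y T / (4 * EY)" for T
  have "(\<Sum>T\<in>TT. phi T) = 2 / real s * (\<Sum>T\<in>TT. X T) + 1 / (4 * EY) * (\<Sum>T\<in>TT. Y T)"
    unfolding phi_def by (simp add: sum.distrib sum_distrib_left sum_divide_distrib)
  also have "\<dots> \<le> 2 / real s * (real (card TT) * (real s * Q)) + 1 / (4 * EY) * (real (card TT) * EY)"
    using SX SY EYpos spos by (intro add_mono mult_left_mono) auto
  also have "\<dots> = real (card TT) * (2 * Q + 1/4)" using spos EYpos by (simp add: field_simps)
  also have "\<dots> < real (card TT)"
  proof -
    have "card TT > 0" using finTT TTne by (simp add: card_gt_0_iff)
    then show ?thesis using Q4 by simp
  qed
  finally obtain T where T: "T \<in> TT" "phi T < 1" using gpS_markov[OF finTT TTne] by blast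
  have XT: "2 * X T < real s" and YT: "Y T < 4 * EY"
  proof -
    have a: "0 \<le> 2 * X T / real s" using X0 by simp
    have b: "0 \<le> Y T / (4 * EY)" using Y0 EYpos by simp
    have "2 * X T / real s < 1" using T(2) b unfolding phi_def by linarith
    then show "2 * X T < real s" using spos by (simp add: field_simps)
    have "Y T / (4 * EY) < 1" using T(2) a unfolding phi_def by linarith
    then show "Y T < 4 * EY" using EYpos by (simp add: field_simps)
  qed
  have TU: "T \<subseteq> U" and cT: "card T = s" using T(1) unfolding TT_def by auto
  have finT: "finite T" using TU finU finite_subset by blast
  obtain T' where T': "T' \<subseteq> T" "gp' (S \<union> T')" "real (card T) \<le> real (card T') + X T"
    using prune[OF finT TU SU gpS] unfolding X_def K_def P2_def P3_def pairs_def by blast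
  show ?thesis
  proof (intro exI conjI)
    show "T' \<subseteq> sq (2^k) (2^k)" using T'(1) TU unfolding U_def N_def by auto
    show "gp' (S \<union> T')" by (rule T'(2))
    show "s \<le> 2 * card T'" using T'(3) XT cT by linarith
    show "card T' \<le> s" using card_mono[OF finT T'(1)] cT by simp
    have "Psi (S \<union> T') \<le> Psi S + Y T"
      using psi_union[OF finS T'(1) TU finU SU] unfolding Y_def by simp
    also have "\<dots> \<le> Psi S + 4 * EY" using YT by simp
    finally show "Psi (S \<union> T') \<le> Psi S + 4 * (16 * (real k + 2) * real s * (real s + 2*M) / 2^k + 1)"
      unfolding EY_def \<gamma>_def rN .
  qed
qed


lemma collinear_imp_coll:
  assumes "collinear {lat_pt a, lat_pt b, lat_pt c}"
  shows "coll a b c"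
proof -
  have e: "{lat_pt a, lat_pt b, lat_pt c} = {lat_pt b, lat_pt a, lat_pt c}" by auto
  have e2: "collinear {lat_pt b, lat_pt a, lat_pt c} \<longleftrightarrow> collinear {0, lat_pt b - lat_pt a, lat_pt c - lat_pt a}"
    by (rule collinear_3) (simp add: NO_MATCH_def)
  have "collinear {0, lat_pt b - lat_pt a, lat_pt c - lat_pt a}"
    using assms unfolding e e2 .
  then consider "lat_pt b - lat_pt a = 0" | "lat_pt c - lat_pt a = 0"
    | cc where "lat_pt c - lat_pt a = cc *\<^sub>R (lat_pt b - lat_pt a)"
    unfolding collinear_lemma by blast
  then show ?thesis
  proof cases
    case 1 then show ?thesis by (simp add: coll_def lat_pt_def prod_eq_iff)
  next
    case 2 then show ?thesis by (simp add: coll_def lat_pt_def prod_eq_iff)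
  next
    case 3
    hence e1: "real_of_int (fst c) - fst a = cc * (real_of_int (fst b) - fst a)"
      and e2: "real_of_int (snd c) - snd a = cc * (real_of_int (snd b) - snd a)"
      by (auto simp: lat_pt_def prod_eq_iff)
    have "real_of_int ((fst b - fst a) * (snd c - snd a)) = (real_of_int (fst b) - fst a) * (real_of_int (snd c) - snd a)" by simp
    also have "\<dots> = (real_of_int (fst b) - fst a) * (cc * (real_of_int (snd b) - snd a))" using e2 by simp
    also have "\<dots> = (real_of_int (snd b) - snd a) * (cc * (real_of_int (fst b) - fst a))" by (simp add: algebra_simps)
    also have "\<dots> = (real_of_int (snd b) - snd a) * (real_of_int (fst c) - fst a)" using e1 by simp
    also have "\<dots> = real_of_int ((snd b - snd a) * (fst c - fst a))" by simp
    finally have "real_of_int ((fst b - fst a) * (snd c - snd a)) = real_of_int ((snd b - snd a) * (fst c - fst a))" .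
    then show ?thesis unfolding coll_def by (simp only: of_int_eq_iff)
  qed
qed


definition F :: "real \<Rightarrow> nat \<Rightarrow> nat" where
  "F a k = nat \<lfloor>2^k / real k powr a\<rfloor>"

definition sz :: "real \<Rightarrow> nat \<Rightarrow> nat" where
  "sz a j = F a (Suc j) - F a j"

definition Mb :: "real \<Rightarrow> nat \<Rightarrow> nat" where
  "Mb a k = (\<Sum>j<k. sz a j)"

definition gam :: "nat \<Rightarrow> real" where
  "gam k = 16 * (real k + 2)"

definition incb :: "real \<Rightarrow> nat \<Rightarrow> real" where
  "incb a j = 4 * (gam j * real (sz a j) * (real (sz a j) + 2 * real (Mb a j)) / 2^j + 1)"

definition Pb :: "real \<Rightarrow> nat \<Rightarrow> real" where
  "Pb a k = (\<Sum>j<k. incb a j)"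

definition condk :: "real \<Rightarrow> nat \<Rightarrow> bool" where
  "condk a k \<longleftrightarrow> sz a k \<le> 4^k \<and>
     (2^k * Pb a k + real (Mb a k)^2) / 4^k + 2 * real (sz a k) * real (Mb a k) * (gam k + 1) / 4^k
       + 3 * real (sz a k) ^ 2 * (gam k + 1) / 4^k \<le> 1/4"

definition tt :: "real \<Rightarrow> nat \<Rightarrow> nat" where
  "tt a k = (if condk a k then sz a k else 0)"

definition goodblk :: "real \<Rightarrow> nat \<Rightarrow> (int \<times> int) set \<Rightarrow> (int \<times> int) set \<Rightarrow> bool" where
  "goodblk a k S T' \<longleftrightarrow> T' \<subseteq> sq (2^k) (2^k) \<and> gp' (S \<union> T') \<and> tt a k \<le> 2 * card T' \<and>
     card T' \<le> tt a k \<and> Psi (S \<union> T') \<le> Psi S + incb a k"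

primrec stage :: "real \<Rightarrow> nat \<Rightarrow> (int \<times> int) set" where
  "stage a 0 = {}"
| "stage a (Suc k) = stage a k \<union> (SOME T'. goodblk a k (stage a k) T')"

definition invar :: "real \<Rightarrow> nat \<Rightarrow> (int \<times> int) set \<Rightarrow> bool" where
  "invar a k S \<longleftrightarrow> finite S \<and> S \<subseteq> sq 0 (2^k) \<and> gp' S \<and> card S \<le> Mb a k \<and> Psi S \<le> Pb a k \<and>
     (\<Sum>j<k. tt a j) \<le> 2 * card S"

lemma good_exists:
  assumes "invar a k S"
  shows "\<exists>T'. goodblk a k S T'"
proof -
  have finS: "finite S" and Ssub: "S \<subseteq> sq 0 (2^k)" and gpS: "gp' S" and cS: "card S \<le> Mb a k"
    and PS: "Psi S \<le> Pb a k" using assms unfolding invar_def by auto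
  have sle: "tt a k \<le> 4^k" unfolding tt_def condk_def by auto
  have cond: "(2^k * Pb a k + real (Mb a k)^2) / 4^k + 2 * real (tt a k) * real (Mb a k) * (16 * (real k + 2) + 1) / 4^k
                 + 3 * real (tt a k) ^ 2 * (16 * (real k + 2) + 1) / 4^k \<le> 1/4" if "tt a k > 0"
  proof -
    have "condk a k" and "tt a k = sz a k" using that unfolding tt_def by (auto split: if_splits)
    then show ?thesis unfolding condk_def gam_def by simp
  qed
  obtain T' where T': "T' \<subseteq> sq (2^k) (2^k)" "gp' (S \<union> T')" "tt a k \<le> 2 * card T'" "card T' \<le> tt a k"
     "Psi (S \<union> T') \<le> Psi S + 4 * (16 * (real k + 2) * real (tt a k) * (real (tt a k) + 2 * real (Mb a k)) / 2^k + 1)"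
    using block_exists[OF finS Ssub gpS _ PS sle cond] cS by auto
  have "tt a k \<le> sz a k" unfolding tt_def by auto
  then have "4 * (16 * (real k + 2) * real (tt a k) * (real (tt a k) + 2 * real (Mb a k)) / 2^k + 1) \<le> incb a k"
    unfolding incb_def gam_def
    by (intro mult_left_mono add_mono divide_right_mono mult_mono) auto
  then show ?thesis using T' unfolding goodblk_def by (intro exI[of _ T']) auto
qed

lemma sq_mono: "sq 0 (2^k) \<subseteq> sq 0 (2^Suc k)"
  unfolding sq_def by auto

lemma sq_blk: "sq (2^k) (2^k) \<subseteq> sq 0 (2^Suc k)"
  unfolding sq_def by auto

lemma sq_disj: "sq 0 (2^k) \<inter> sq (2^k) (2^k) = {}"
  unfolding sq_def by auto

lemma invar_stage: "invar a k (stage a k)"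
proof (induction k)
  case 0
  show ?case unfolding invar_def by (simp add: gp'_def Psi_def offd_def Pb_def Mb_def)
next
  case (Suc k)
  define S where "S = stage a k"
  define T' where "T' = (SOME T'. goodblk a k S T')"
  have IH: "invar a k S" using Suc.IH unfolding S_def .
  have g: "goodblk a k S T'" unfolding T'_def using good_exists[OF IH] by (rule someI_ex)
  have st: "stage a (Suc k) = S \<union> T'" unfolding S_def T'_def by simp
  have finS: "finite S" and Ssub: "S \<subseteq> sq 0 (2^k)" and cS: "card S \<le> Mb a k"
    and PS: "Psi S \<le> Pb a k" and tS: "(\<Sum>j<k. tt a j) \<le> 2 * card S" using IH unfolding invar_def by auto
  have T'sub: "T' \<subseteq> sq (2^k) (2^k)" and gp: "gp' (S \<union> T')" and t1: "tt a k \<le> 2 * card T'"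
    and t2: "card T' \<le> tt a k" and ps: "Psi (S \<union> T') \<le> Psi S + incb a k"
    using g unfolding goodblk_def by auto
  have finT: "finite T'" using T'sub finite_subset by (metis finite_sq)
  have disj: "S \<inter> T' = {}" using Ssub T'sub sq_disj by blast
  have card_un: "card (S \<union> T') = card S + card T'" using finS finT disj by (simp add: card_Un_disjoint)
  have "invar a (Suc k) (S \<union> T')"
    unfolding invar_def
  proof (intro conjI)
    show "finite (S \<union> T')" using finS finT by simp
    show "S \<union> T' \<subseteq> sq 0 (2 ^ Suc k)" using Ssub T'sub sq_mono sq_blk by blast
    show "gp' (S \<union> T')" by (rule gp)
    show "card (S \<union> T') \<le> Mb a (Suc k)"
      using card_un cS t2 unfolding Mb_def tt_def by (auto split: if_splits)
    show "Psi (S \<union> T') \<le> Pb a (Suc k)" using ps PS unfolding Pb_def by simp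
    show "(\<Sum>j<Suc k. tt a j) \<le> 2 * card (S \<union> T')" using tS t1 card_un by simp
  qed
  then show ?case using st by simp
qed

lemma stage_props:
  "finite (stage a k)" "stage a k \<subseteq> sq 0 (2^k)" "gp' (stage a k)" "card (stage a k) \<le> Mb a k"
  "(\<Sum>j<k. tt a j) \<le> 2 * card (stage a k)"
proof -
  note h = invar_stage[of a k, unfolded invar_def]
  show "finite (stage a k)" using h by (rule conjunct1)
  show "stage a k \<subseteq> sq 0 (2^k)" using h by blast
  show "gp' (stage a k)" using h by blast
  show "card (stage a k) \<le> Mb a k" using h by blast
  show "(\<Sum>j<k. tt a j) \<le> 2 * card (stage a k)" using h by blast
qed

definition Sset :: "real \<Rightarrow> (int \<times> int) set" where
  "Sset a = (\<Union>k. stage a k)"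

lemma gp'D: "gp' A \<Longrightarrow> a \<in> A \<Longrightarrow> b \<in> A \<Longrightarrow> c \<in> A \<Longrightarrow> a \<noteq> b \<Longrightarrow> a \<noteq> c \<Longrightarrow> b \<noteq> c \<Longrightarrow> \<not> coll a b c"
  unfolding gp'_def by blast

lemma stage_mono: "k \<le> l \<Longrightarrow> stage a k \<subseteq> stage a l"
  by (induction l rule: dec_induct) auto

lemma gp_Sset: "gp' (Sset a)"
  unfolding gp'_def
proof (intro ballI impI)
  fix p q r assume "p \<in> Sset a" "q \<in> Sset a" "r \<in> Sset a" and d: "p \<noteq> q" "p \<noteq> r" "q \<noteq> r"
  then obtain i j l where "p \<in> stage a i" "q \<in> stage a j" "r \<in> stage a l" unfolding Sset_def by auto
  moreover have "i \<le> max i (max j l)" "j \<le> max i (max j l)" "l \<le> max i (max j l)" by simp_all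
  ultimately have "p \<in> stage a (max i (max j l))" "q \<in> stage a (max i (max j l))" "r \<in> stage a (max i (max j l))"
    using stage_mono[of _ "max i (max j l)" a] by blast+
  moreover have "gp' (stage a (max i (max j l)))" by (rule stage_props(3))
  ultimately show "\<not> coll p q r" using d gp'D by blast
qed

lemma stage_low:
  assumes "p \<in> stage a j" "fst p \<le> 2^K"
  shows "p \<in> stage a K"
  using assms(1)
proof (induction j)
  case 0 then show ?case by simp
next
  case (Suc j)
  show ?case
  proof (cases "p \<in> stage a j")
    case True then show ?thesis using Suc.IH by blast
  next
    case False
    then have "p \<in> (SOME T'. goodblk a j (stage a j) T')" using Suc.prems by simp
    moreover have "goodblk a j (stage a j) (SOME T'. goodblk a j (stage a j) T')"
      using good_exists[OF invar_stage] by (rule someI_ex)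
    ultimately have "p \<in> sq (2^j) (2^j)" unfolding goodblk_def by blast
    then have "(2::int)^j + 1 \<le> fst p" unfolding sq_def by auto
    then have "(2::int)^j < 2^K" using assms(2) by linarith
    then have "j < K" using power_less_imp_less_exp[of "2::int" j K] by simp
    then have "stage a (Suc j) \<subseteq> stage a K" by (intro stage_mono) simp
    then show ?thesis using Suc.prems by blast
  qed
qed

lemma grid_upper:
  assumes "n \<le> 2^K"
  shows "Sset a \<inter> grid n \<subseteq> stage a K"
proof
  fix p assume "p \<in> Sset a \<inter> grid n"
  then obtain j where "p \<in> stage a j" "fst p \<le> int n" unfolding Sset_def grid_def by auto
  moreover have "int n \<le> 2^K" using assms by (metis of_nat_le_iff of_nat_numeral of_nat_power)
  ultimately have "fst p \<le> 2^K" by linarith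
  then show "p \<in> stage a K" using \<open>p \<in> stage a j\<close> stage_low by blast
qed

lemma grid_lower:
  assumes "2^K \<le> n"
  shows "stage a K \<subseteq> Sset a \<inter> grid n"
proof -
  have "(2::int)^K \<le> int n" using assms by (metis of_nat_le_iff of_nat_numeral of_nat_power)
  note h = this
  have "sq 0 (2^K) \<subseteq> grid n"
  proof
    fix p assume "p \<in> sq 0 (2^K)"
    then have "1 \<le> fst p" "fst p \<le> 2^K" "1 \<le> snd p" "snd p \<le> 2^K" unfolding sq_def by auto
    then have "1 \<le> fst p" "fst p \<le> int n" "1 \<le> snd p" "snd p \<le> int n" using h by linarith+
    then show "p \<in> grid n" unfolding grid_def by (cases p) simp
  qed
  note sg = this
  have ss: "stage a K \<subseteq> Sset a" unfolding Sset_def by (rule UN_upper) simp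
  show ?thesis by (rule Int_greatest[OF ss order.trans[OF stage_props(2) sg]])
qed

lemma card_grid_bounds:
  assumes "2^K \<le> n" "n \<le> 2^L"
  shows "card (stage a K) \<le> card (Sset a \<inter> grid n)" "card (Sset a \<inter> grid n) \<le> Mb a L"
proof -
  have fg: "finite (Sset a \<inter> grid n)" unfolding grid_def by simp
  show "card (stage a K) \<le> card (Sset a \<inter> grid n)" by (rule card_mono[OF fg grid_lower[OF assms(1)]])
  have "card (Sset a \<inter> grid n) \<le> card (stage a L)"
    using grid_upper[OF assms(2)] stage_props(1)[of a L] by (intro card_mono) auto
  also have "\<dots> \<le> Mb a L" by (rule stage_props(4))
  finally show "card (Sset a \<inter> grid n) \<le> Mb a L" .
qed

lemma general_position_Sset: "general_position (Sset a)"
  unfolding general_position_def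
proof (intro ballI impI notI)
  fix p q r assume h: "p \<in> Sset a" "q \<in> Sset a" "r \<in> Sset a" and d: "p \<noteq> q \<and> p \<noteq> r \<and> q \<noteq> r"
    and c: "collinear {lat_pt p, lat_pt q, lat_pt r}"
  have d1: "p \<noteq> q" "p \<noteq> r" "q \<noteq> r" using d by simp_all
  have "\<not> coll p q r" by (rule gp'D[OF gp_Sset h d1])
  moreover have "coll p q r" by (rule collinear_imp_coll[OF c])
  ultimately show False by contradiction
qed


lemma R1: "eventually (\<lambda>k::nat. 2^k / real k powr a \<le> 2^(Suc k) / real (Suc k) powr a) sequentially"
  by real_asymp
lemma R6: "eventually (\<lambda>k::nat. C \<le> 2^k / real k powr a) sequentially"
  by real_asymp
lemma R3: "eventually (\<lambda>j::nat. 768*(real j+2)/real j^2 + 4/2^j \<le> 1/64) sequentially"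
  by real_asymp
lemma R4: "eventually (\<lambda>k::nat. C / 2^k \<le> (1/64::real)) sequentially"
  by real_asymp
lemma R5: "eventually (\<lambda>k::nat. (24 + 320*(real k+2))/real k^2 \<le> (1/8::real)) sequentially"
  by real_asymp
lemma R7: "eventually (\<lambda>k::nat. C \<le> 2^k / real k) sequentially"
  by real_asymp

lemma F_le: "real (F a k) \<le> 2^k / real k powr a"
proof -
  have x0: "0 \<le> 2^k / real k powr a" by simp
  then have "0 \<le> \<lfloor>2^k / real k powr a\<rfloor>" by simp
  then have "real (F a k) = real_of_int \<lfloor>2^k / real k powr a\<rfloor>" unfolding F_def by simp
  also have "\<dots> \<le> 2^k / real k powr a" by (rule of_int_floor_le)
  finally show ?thesis .
qed

lemma F_ge: "real (F a k) \<ge> 2^k / real k powr a - 1"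
proof -
  have "0 \<le> \<lfloor>2^k / real k powr a\<rfloor>" by simp
  then have "real (F a k) = real_of_int \<lfloor>2^k / real k powr a\<rfloor>" unfolding F_def by simp
  moreover have "2^k / real k powr a - 1 < real_of_int \<lfloor>2^k / real k powr a\<rfloor>" by linarith
  ultimately show ?thesis by linarith
qed

lemma F_le_k:
  assumes "a \<ge> 1" "k \<ge> 1"
  shows "real (F a k) \<le> 2^k / real k"
proof -
  have "real k powr 1 \<le> real k powr a" using assms by (intro powr_mono) auto
  then have "real k \<le> real k powr a" using assms by simp
  then have "2^k / real k powr a \<le> 2^k / real k" using assms by (intro divide_left_mono) auto
  then show ?thesis using F_le[of a k] by linarith
qed

lemma sz_le:
  assumes "a \<ge> 1" "k \<ge> 1"
  shows "real (sz a k) \<le> 2 * (2^k / real k)"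
proof -
  have "real (sz a k) \<le> real (F a (Suc k))" unfolding sz_def by simp
  also have "\<dots> \<le> 2^Suc k / real (Suc k)" by (rule F_le_k) (use assms in auto)
  also have "\<dots> \<le> 2^Suc k / real k" using assms by (intro divide_left_mono) auto
  also have "\<dots> = 2 * (2^k / real k)" by simp
  finally show ?thesis .
qed

lemma F_mono_ev: "\<exists>K1. \<forall>k\<ge>K1. F a k \<le> F a (Suc k)"
proof -
  obtain K1 where K1: "\<And>k. k \<ge> K1 \<Longrightarrow> 2^k / real k powr a \<le> 2^(Suc k) / real (Suc k) powr a"
    using R1[of a] unfolding eventually_sequentially by blast
  show ?thesis
  proof (intro exI allI impI)
    fix k assume "k \<ge> K1"
    then have "\<lfloor>2^k / real k powr a\<rfloor> \<le> \<lfloor>2^(Suc k) / real (Suc k) powr a\<rfloor>"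
      using K1 by (intro floor_mono) auto
    then show "F a k \<le> F a (Suc k)" unfolding F_def by (intro nat_mono)
  qed
qed

lemma Mb_tele:
  assumes "\<forall>k\<ge>K1. F a k \<le> F a (Suc k)" "k \<ge> K1"
  shows "Mb a k = Mb a K1 + (F a k - F a K1) \<and> F a K1 \<le> F a k"
  using assms(2)
proof (induction k rule: dec_induct)
  case base then show ?case by simp
next
  case (step k)
  have m: "F a k \<le> F a (Suc k)" using assms(1) step.hyps(1) by simp
  have "Mb a (Suc k) = Mb a k + sz a k" unfolding Mb_def by simp
  then show ?case using step.IH m unfolding sz_def by auto
qed

lemma tt_tele:
  assumes "\<forall>k\<ge>K0. F a k \<le> F a (Suc k)" "\<forall>k\<ge>K0. condk a k" "k \<ge> K0"
  shows "F a k \<le> (\<Sum>j<k. tt a j) + F a K0"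
  using assms(3)
proof (induction k rule: dec_induct)
  case base then show ?case by simp
next
  case (step k)
  have m: "F a k \<le> F a (Suc k)" using assms(1) step.hyps(1) by simp
  have t: "tt a k = sz a k" using assms(2) step.hyps(1) unfolding tt_def by simp
  show ?case using step.IH m t unfolding sz_def by simp
qed

lemma cond_arith:
  fixes X s m P :: real and k :: nat
  assumes k1: "k \<ge> 1" and X: "X > 0"
    and s: "0 \<le> s" "s \<le> 2 * (X / real k)" and m: "0 \<le> m" "m \<le> 2 * (X / real k)"
    and P: "P / X \<le> 1/32" and R: "(24 + 320*(real k+2))/real k^2 \<le> 1/8"
  shows "(X * P + m^2) / X^2 + 2 * s * m * (16 * (real k + 2) + 1) / X^2
       + 3 * s ^ 2 * (16 * (real k + 2) + 1) / X^2 \<le> 1/4"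
proof -
  define y where "y = 2 * (X / real k)"
  define g where "g = 16 * (real k + 2) + 1"
  have g0: "g \<ge> 0" unfolding g_def by simp
  have y0: "0 \<le> y" unfolding y_def using X by simp
  have yy: "y^2 / X^2 = 4 / real k^2" unfolding y_def using X k1 by (simp add: field_simps power2_eq_square)
  have mm: "m^2 \<le> y^2" using m unfolding y_def by (intro power_mono) auto
  have sm: "s * m \<le> y^2" using s m unfolding y_def power2_eq_square by (intro mult_mono) auto
  have ss: "s^2 \<le> y^2" using s unfolding y_def by (intro power_mono) auto
  have X2: "X^2 > 0" using X by simp
  have t1: "(X * P + m^2) / X^2 = P / X + m^2 / X^2" using X by (simp add: field_simps power2_eq_square)
  have t1b: "m^2 / X^2 \<le> 4 / real k^2" using mm X2 yy by (metis divide_right_mono less_le)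
  have t2: "2 * s * m * g / X^2 \<le> 2 * g * (4 / real k^2)"
  proof -
    have "2 * s * m * g / X^2 = 2 * g * ((s * m) / X^2)" by (simp add: field_simps)
    also have "\<dots> \<le> 2 * g * (y^2 / X^2)" using sm X2 g0 by (intro mult_left_mono divide_right_mono) auto
    finally show ?thesis using yy by simp
  qed
  have t3: "3 * s^2 * g / X^2 \<le> 3 * g * (4 / real k^2)"
  proof -
    have "3 * s^2 * g / X^2 = 3 * g * (s^2 / X^2)" by (simp add: field_simps)
    also have "\<dots> \<le> 3 * g * (y^2 / X^2)" using ss X2 g0 by (intro mult_left_mono divide_right_mono) auto
    finally show ?thesis using yy by simp
  qed
  have e: "4 / real k^2 + 2 * g * (4 / real k^2) + 3 * g * (4 / real k^2) = (24 + 320*(real k+2))/real k^2"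
    unfolding g_def using k1 by (simp add: field_simps)
  have "(X * P + m^2) / X^2 + 2 * s * m * g / X^2 + 3 * s ^ 2 * g / X^2
      \<le> 1/32 + (24 + 320*(real k+2))/real k^2"
    using t1 t1b t2 t3 P e by linarith
  also have "\<dots> \<le> 1/4" using R by linarith
  finally show ?thesis unfolding g_def .
qed

lemma cond_ev:
  assumes a1: "a \<ge> 1"
  shows "\<exists>K0. \<forall>k\<ge>K0. condk a k"
proof -
  obtain K1 where K1: "\<forall>k\<ge>K1. F a k \<le> F a (Suc k)" using F_mono_ev by blast
  define C0 where "C0 = real (Mb a K1)"
  have Mb1: "real (Mb a k) \<le> C0 + 2^k / real k" if "k \<ge> K1" "k \<ge> 1" for k
  proof -
    have "Mb a k = Mb a K1 + (F a k - F a K1)" using Mb_tele[OF K1 that(1)] by blast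
    then have "real (Mb a k) \<le> C0 + real (F a k)" unfolding C0_def by simp
    then show ?thesis using F_le_k[OF a1 that(2)] by linarith
  qed
  obtain J1 where J1: "\<And>k. k \<ge> J1 \<Longrightarrow> C0 \<le> 2^k / real k" using R7[of C0] unfolding eventually_sequentially by blast
  define J2 where "J2 = max J1 (max K1 1)"
  have Mb2: "real (Mb a k) \<le> 2 * (2^k / real k)" if "k \<ge> J2" for k
    using Mb1[of k] J1[of k] that unfolding J2_def by auto
  have incb_le: "incb a j \<le> 2^j * (768*(real j+2)/real j^2 + 4/2^j)" if "j \<ge> J2" for j
  proof -
    have j1: "j \<ge> 1" using that unfolding J2_def by simp
    define x where "x = 2^j / real j"
    have x0: "0 \<le> x" unfolding x_def by simp
    have szb: "real (sz a j) \<le> 2 * x" unfolding x_def by (rule sz_le[OF a1 j1])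
    have mbb: "real (Mb a j) \<le> 2 * x" unfolding x_def by (rule Mb2[OF that])
    have p1: "real (sz a j) + 2 * real (Mb a j) \<le> 6 * x" using szb mbb by linarith
    have p2: "real (sz a j) * (real (sz a j) + 2 * real (Mb a j)) \<le> (2 * x) * (6 * x)"
      using szb p1 x0 by (intro mult_mono) auto
    have "gam j * real (sz a j) * (real (sz a j) + 2 * real (Mb a j)) \<le> gam j * ((2 * x) * (6 * x))"
      using p2 unfolding gam_def by (simp add: mult.assoc mult_left_mono)
    then have "incb a j \<le> 4 * (gam j * ((2 * x) * (6 * x)) / 2^j + 1)"
      unfolding incb_def by (intro mult_left_mono add_right_mono divide_right_mono) auto
    also have "\<dots> = 2^j * (768*(real j+2)/real j^2 + 4/2^j)"
      unfolding gam_def x_def using j1 by (simp add: field_simps power2_eq_square)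
    finally show ?thesis .
  qed
  obtain J3 where J3: "\<And>j. j \<ge> J3 \<Longrightarrow> 768*(real j+2)/real j^2 + 4/2^j \<le> 1/64"
    using R3 unfolding eventually_sequentially by blast
  define J4 where "J4 = max J2 J3"
  have incb2: "incb a j \<le> 2^j / 64" if "j \<ge> J4" for j
  proof -
    have "incb a j \<le> 2^j * (768*(real j+2)/real j^2 + 4/2^j)" using incb_le that unfolding J4_def by simp
    also have "\<dots> \<le> 2^j * (1/64)" using J3[of j] that unfolding J4_def by (intro mult_left_mono) auto
    finally show ?thesis by simp
  qed
  have Pb1: "Pb a k \<le> Pb a J4 + 2^k / 64" if "k \<ge> J4" for k
    using that
  proof (induction k rule: dec_induct)
    case base then show ?case by simp
  next
    case (step k)
    have "Pb a (Suc k) = Pb a k + incb a k" unfolding Pb_def by simp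
    then show ?case using step.IH incb2[OF step.hyps(1)] by simp
  qed
  obtain J5 where J5: "\<And>k. k \<ge> J5 \<Longrightarrow> Pb a J4 / 2^k \<le> 1/64"
    using R4[of "Pb a J4"] unfolding eventually_sequentially by blast
  obtain J6 where J6: "\<And>k. k \<ge> J6 \<Longrightarrow> (24 + 320*(real k+2))/real k^2 \<le> 1/8"
    using R5 unfolding eventually_sequentially by blast
  show ?thesis
  proof (intro exI allI impI)
    fix k assume k: "k \<ge> max J4 (max J5 J6)"
    have k1: "k \<ge> 1" and kJ2: "k \<ge> J2" using k unfolding J4_def J2_def by auto
    have X: "(2::real)^k > 0" by simp
    have P: "Pb a k / 2^k \<le> 1/32"
    proof -
      have "Pb a k / 2^k \<le> (Pb a J4 + 2^k / 64) / 2^k" using Pb1[of k] k by (intro divide_right_mono) auto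
      also have "\<dots> = Pb a J4 / 2^k + 1/64" by (simp add: field_simps)
      also have "\<dots> \<le> 1/32" using J5[of k] k by linarith
      finally show ?thesis .
    qed
    have szb: "real (sz a k) \<le> 2 * (2^k / real k)" by (rule sz_le[OF a1 k1])
    have ineq: "(2^k * Pb a k + real (Mb a k)^2) / (2^k)^2 + 2 * real (sz a k) * real (Mb a k) * (16 * (real k + 2) + 1) / (2^k)^2
       + 3 * real (sz a k) ^ 2 * (16 * (real k + 2) + 1) / (2^k)^2 \<le> 1/4"
      by (rule cond_arith[OF k1 X _ szb _ Mb2[OF kJ2] P J6]) (use k in auto)
    have four: "(4::real)^k = (2^k)^2" by (simp flip: power_mult_distrib power_mult add: power2_eq_square)
    have "real (sz a k) \<le> 4^k"
    proof -
      have "2 * (2^k / real k) \<le> 2 * (2::real)^k" using k1 by (intro mult_left_mono) (auto simp: divide_le_eq)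
      also have "\<dots> \<le> 2^k * 2^k" using k1 by (intro mult_right_mono) (auto simp: one_le_power self_le_power)
      also have "\<dots> = 4^k" using four by (simp add: power2_eq_square)
      finally show ?thesis using szb by linarith
    qed
    then have "sz a k \<le> 4^k" by (metis of_nat_le_iff of_nat_numeral of_nat_power)
    then show "condk a k" unfolding condk_def gam_def using ineq four by simp
  qed
qed


lemma ln_bounds:
  fixes n k :: nat
  assumes "2^(Suc k) \<le> n" "n \<le> 2^(Suc (Suc k))"
  shows "real (Suc k) * ln 2 \<le> ln (real n)" "ln (real n) \<le> real (Suc (Suc k)) * ln 2" "ln (real n) > 0"
proof -
  have n1: "(2::real)^(Suc k) \<le> real n" using assms(1) by (metis of_nat_le_iff of_nat_numeral of_nat_power)
  have n2: "real n \<le> (2::real)^(Suc (Suc k))" using assms(2) by (metis of_nat_le_iff of_nat_numeral of_nat_power)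
  have "(0::real) < 2^(Suc k)" by simp
  then have np: "real n > 0" using n1 by linarith
  have "ln ((2::real)^(Suc k)) \<le> ln (real n)" using n1 np by (subst ln_le_cancel_iff) auto
  moreover have "ln ((2::real)^(Suc k)) = real (Suc k) * ln 2" by (rule ln_realpow; simp)
  ultimately show "real (Suc k) * ln 2 \<le> ln (real n)" by linarith
  have "ln (real n) \<le> ln ((2::real)^(Suc (Suc k)))" using n2 np by (subst ln_le_cancel_iff) auto
  moreover have "ln ((2::real)^(Suc (Suc k))) = real (Suc (Suc k)) * ln 2" by (rule ln_realpow; simp)
  ultimately show "ln (real n) \<le> real (Suc (Suc k)) * ln 2" by linarith
  have "(1::real) < 2^(Suc k)" by (rule one_less_power) auto
  then have "1 < real n" using n1 by linarith
  then show "ln (real n) > 0" by simp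
qed

lemma main_bounds:
  assumes a1: "a \<ge> 1"
  shows "\<exists>c1 c2 N0. c1 > 0 \<and> c2 > 0 \<and> (\<forall>n\<ge>N0.
     c1 * (real n / ln (real n) powr a) \<le> real (card (Sset a \<inter> grid n)) \<and>
     real (card (Sset a \<inter> grid n)) \<le> c2 * (real n / ln (real n) powr a))"
proof -
  obtain K1 where K1: "\<forall>k\<ge>K1. F a k \<le> F a (Suc k)" using F_mono_ev by blast
  obtain K0' where K0': "\<forall>k\<ge>K0'. condk a k" using cond_ev[OF a1] by blast
  define K0 where "K0 = max K0' K1"
  have K0m: "\<forall>k\<ge>K0. F a k \<le> F a (Suc k)" and K0c: "\<forall>k\<ge>K0. condk a k" using K1 K0' unfolding K0_def by auto
  define C0 where "C0 = real (Mb a K1)"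
  obtain K2 where K2: "\<And>k. k \<ge> K2 \<Longrightarrow> 2 * (1 + real (F a K0)) \<le> 2^k / real k powr a"
    using R6[of "2 * (1 + real (F a K0))" a] unfolding eventually_sequentially by blast
  obtain K3 where K3: "\<And>k. k \<ge> K3 \<Longrightarrow> C0 \<le> 2^k / real k powr a"
    using R6[of C0 a] unfolding eventually_sequentially by blast
  define K where "K = max K0 (max K1 (max K2 K3))"
  have low: "real (card (stage a (Suc k))) \<ge> (1/4) * (2^Suc k / real (Suc k) powr a)" if "k \<ge> K" for k
  proof -
    define X where "X = 2^Suc k / real (Suc k) powr a"
    have kK0: "Suc k \<ge> K0" using that unfolding K_def by simp
    have "F a (Suc k) \<le> (\<Sum>j<Suc k. tt a j) + F a K0" by (rule tt_tele[OF K0m K0c kK0])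
    moreover have "(\<Sum>j<Suc k. tt a j) \<le> 2 * card (stage a (Suc k))" by (rule stage_props(5))
    ultimately have "real (F a (Suc k)) \<le> 2 * real (card (stage a (Suc k))) + real (F a K0)" by linarith
    moreover have "real (F a (Suc k)) \<ge> X - 1" unfolding X_def by (rule F_ge)
    moreover have "2 * (1 + real (F a K0)) \<le> X" using K2[of "Suc k"] that unfolding K_def X_def by simp
    ultimately have "X \<le> 4 * real (card (stage a (Suc k)))" by (smt (verit))
    then have "(1/4) * X \<le> real (card (stage a (Suc k)))" by simp
    then show ?thesis unfolding X_def .
  qed
  have up: "real (Mb a (Suc (Suc k))) \<le> 2 * (2^Suc (Suc k) / real (Suc (Suc k)) powr a)" if "k \<ge> K" for k
  proof -
    have kK1: "Suc (Suc k) \<ge> K1" using that unfolding K_def by simp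
    have "Mb a (Suc (Suc k)) = Mb a K1 + (F a (Suc (Suc k)) - F a K1)" using Mb_tele[OF K1 kK1] by blast
    then have "real (Mb a (Suc (Suc k))) \<le> C0 + real (F a (Suc (Suc k)))" unfolding C0_def by simp
    moreover have "real (F a (Suc (Suc k))) \<le> 2^Suc (Suc k) / real (Suc (Suc k)) powr a" by (rule F_le)
    moreover have "C0 \<le> 2^Suc (Suc k) / real (Suc (Suc k)) powr a" using K3[of "Suc (Suc k)"] that unfolding K_def by simp
    ultimately show ?thesis by linarith
  qed
  define c1 where "c1 = ln 2 powr a / 8"
  define c2 where "c2 = 4 * ln 2 powr a"
  have l2: "ln (2::real) > 0" by simp
  have la: "ln (2::real) powr a > 0" using l2 by simp
  show ?thesis
  proof (intro exI conjI allI impI)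
    show "c1 > 0" unfolding c1_def using la by simp
    show "c2 > 0" unfolding c2_def using la by simp
    fix n :: nat assume nN: "n \<ge> 2^(Suc K)"
    have n1: "n \<ge> 1" using nN by (metis le_trans one_le_numeral one_le_power)
    obtain m where m: "2^m \<le> n" "n < 2^(m+1)" using ex_power_ivl1[of 2 n] n1 by auto
    have "Suc K \<le> m"
    proof (rule ccontr)
      assume "\<not> Suc K \<le> m"
      then have "m + 1 \<le> Suc K" by simp
      then have "(2::nat)^(m+1) \<le> 2^(Suc K)" by (rule power_increasing) simp
      then show False using m(2) nN by (meson leD order.trans)
    qed
    then obtain k where mk: "m = Suc k" and kK: "k \<ge> K" by (metis Suc_le_D Suc_le_mono)
    have b1: "2^(Suc k) \<le> n" and b2: "n \<le> 2^(Suc (Suc k))" using m mk by auto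
    note lb = ln_bounds[OF b1 b2]
    define L where "L = ln (real n)"
    have Lp: "L > 0" using lb(3) unfolding L_def .
    have rn1: "(2::real)^(Suc k) \<le> real n" using b1 by (metis of_nat_le_iff of_nat_numeral of_nat_power)
    have rn2: "real n \<le> (2::real)^(Suc (Suc k))" using b2 by (metis of_nat_le_iff of_nat_numeral of_nat_power)
    have cb: "card (stage a (Suc k)) \<le> card (Sset a \<inter> grid n)" "card (Sset a \<inter> grid n) \<le> Mb a (Suc (Suc k))"
      using card_grid_bounds[OF b1 b2] by auto
    have pm1: "(real (Suc k) * ln 2) powr a = real (Suc k) powr a * ln 2 powr a" using l2 by (simp add: powr_mult)
    have pm2: "(real (Suc (Suc k)) * ln 2) powr a = real (Suc (Suc k)) powr a * ln 2 powr a" using l2 by (simp add: powr_mult)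
    have La1: "(real (Suc k) * ln 2) powr a \<le> L powr a"
      using lb(1) a1 l2 unfolding L_def by (intro powr_mono2) auto
    have La2: "L powr a \<le> (real (Suc (Suc k)) * ln 2) powr a"
      using lb(2) a1 Lp unfolding L_def by (intro powr_mono2) auto
    have p1: "real (Suc k) powr a > 0" by simp
    have p2: "real (Suc (Suc k)) powr a > 0" by simp
    show "c1 * (real n / ln (real n) powr a) \<le> real (card (Sset a \<inter> grid n))"
    proof -
      have "real n / L powr a \<le> 2^(Suc (Suc k)) / (real (Suc k) * ln 2) powr a"
        using rn2 La1 p1 la pm1 by (intro frac_le) auto
      then have "c1 * (real n / L powr a) \<le> c1 * (2^(Suc (Suc k)) / (real (Suc k) powr a * ln 2 powr a))"
        using pm1 la unfolding c1_def by (intro mult_left_mono) auto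
      also have "\<dots> = (1/4) * (2^Suc k / real (Suc k) powr a)"
        unfolding c1_def using la p1 by (simp add: field_simps)
      also have "\<dots> \<le> real (card (stage a (Suc k)))" by (rule low[OF kK])
      also have "\<dots> \<le> real (card (Sset a \<inter> grid n))" using cb(1) by simp
      finally show ?thesis unfolding L_def .
    qed
    show "real (card (Sset a \<inter> grid n)) \<le> c2 * (real n / ln (real n) powr a)"
    proof -
      have "real (card (Sset a \<inter> grid n)) \<le> real (Mb a (Suc (Suc k)))" using cb(2) by simp
      also have "\<dots> \<le> 2 * (2^Suc (Suc k) / real (Suc (Suc k)) powr a)" by (rule up[OF kK])
      also have "\<dots> = c2 * (2^Suc k / (real (Suc (Suc k)) powr a * ln 2 powr a))"
        unfolding c2_def using la p2 by (simp add: field_simps)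
      also have "\<dots> \<le> c2 * (real n / L powr a)"
      proof -
        have "2^Suc k / (real (Suc (Suc k)) powr a * ln 2 powr a) \<le> real n / L powr a"
          using rn1 La2 pm2 Lp by (intro frac_le) auto
        then show ?thesis unfolding c2_def using la by (intro mult_left_mono) auto
      qed
      finally show ?thesis unfolding L_def .
    qed
  qed
qed


theorem theorem1p3:
  fixes \<epsilon> :: real
  assumes "\<epsilon> > 0"
  shows "\<exists>S :: (int \<times> int) set. general_position S \<and>
     (\<lambda>n::nat. real (card (S \<inter> grid n)))
        \<in> \<Theta>(\<lambda>n::nat. real n / ln (real n) powr (1 + \<epsilon>)) \<and>
     liminf (\<lambda>n::nat. ereal (real (card (S \<inter> grid n)) / (real n / ln (real n) powr (1 + \<epsilon>)))) > 0"
proof -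
  define a where "a = 1 + \<epsilon>"
  have a1: "a \<ge> 1" using assms unfolding a_def by simp
  obtain c1 c2 N0 where c: "c1 > 0" "c2 > 0" and bnd: "\<And>n. n \<ge> N0 \<Longrightarrow>
     c1 * (real n / ln (real n) powr a) \<le> real (card (Sset a \<inter> grid n)) \<and>
     real (card (Sset a \<inter> grid n)) \<le> c2 * (real n / ln (real n) powr a)"
    using main_bounds[OF a1] by blast
  define f where "f n = real (card (Sset a \<inter> grid n))" for n :: nat
  define g where "g n = real n / ln (real n) powr a" for n :: nat
  have gpos: "g n > 0" if "n \<ge> 3" for n
  proof -
    have "real n > 1" using that by simp
    then have "ln (real n) > 0" by simp
    then show ?thesis unfolding g_def using that by simp
  qed
  have ev: "eventually (\<lambda>n. c1 * norm (g n) \<le> norm (f n) \<and> norm (f n) \<le> c2 * norm (g n)) at_top"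
    unfolding eventually_at_top_linorder
  proof (intro exI allI impI)
    fix n :: nat assume "n \<ge> max N0 3"
    then have "n \<ge> N0" "n \<ge> 3" by auto
    then show "c1 * norm (g n) \<le> norm (f n) \<and> norm (f n) \<le> c2 * norm (g n)"
      using bnd[of n] gpos[of n] unfolding f_def g_def by simp
  qed
  have theta: "f \<in> \<Theta>(g)" by (rule bigthetaI'[OF c ev])
  have "eventually (\<lambda>n. ereal c1 \<le> ereal (f n / g n)) sequentially"
    unfolding eventually_sequentially
  proof (intro exI allI impI)
    fix n :: nat assume "n \<ge> max N0 3"
    then have n: "n \<ge> N0" "n \<ge> 3" by auto
    have "c1 * g n \<le> f n" using bnd[OF n(1)] unfolding f_def g_def by simp
    then have "c1 \<le> f n / g n" using gpos[OF n(2)] by (simp add: field_simps)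
    then show "ereal c1 \<le> ereal (f n / g n)" by simp
  qed
  then have "ereal c1 \<le> liminf (\<lambda>n. ereal (f n / g n))" by (rule Liminf_bounded)
  moreover have "(0::ereal) < ereal c1" using c(1) by simp
  ultimately have lim: "liminf (\<lambda>n. ereal (f n / g n)) > 0" by (rule less_le_trans[rotated])
  show ?thesis
  proof (intro exI conjI)
    show "general_position (Sset a)" by (rule general_position_Sset)
    show "(\<lambda>n::nat. real (card (Sset a \<inter> grid n))) \<in> \<Theta>(\<lambda>n::nat. real n / ln (real n) powr (1 + \<epsilon>))"
      using theta unfolding f_def g_def a_def .
    show "liminf (\<lambda>n::nat. ereal (real (card (Sset a \<inter> grid n)) / (real n / ln (real n) powr (1 + \<epsilon>)))) > 0"
      using lim unfolding f_def g_def a_def .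
  qed
qed


end
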